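(* Let $A$ be a finite abelian $p$-group written additively, with a decomposition $A=A_1\oplus\dots\oplus A_k$ into nontrivial homocyclic components of pairwise different exponents, and let $H$ be a finite group of order not divisible by $p$. Let $\Lambda:\mathrm{Aut}(A)\to\mathrm{Aut}(A_1/pA_1)\times\dots\times\mathrm{Aut}(A_k/pA_k)$ be the surjective homomorphism sending an automorphism, written as a matrix $(u_{ij})$ with $u_{ij}\in\mathrm{Hom}(A_i,A_j)$ (so that $x=(x_1,\dots,x_k)\mapsto(\sum_i u_{i1}(x_i),\dots,\sum_i u_{ik}(x_i))$), to $(\overline{u_{11}},\dots,\overline{u_{kk}})$ where $\overline{u_{ii}}(x+pA_i)=u_{ii}(x)+pA_i$, and let $\Lambda_i:\mathrm{Aut}(A)\to\mathrm{Aut}(A_i/pA_i)$ be $\Lambda$ followed by projection to the $i$-th factor. Then for representations $\alpha,\beta:H\to\mathrm{Aut}(A)$ we have $\alpha\sim\beta$ if and only if $\alpha\circ\Lambda_i\sim\beta\circ\Lambda_i$ for all $i=1,\dots,k$ (here $\alpha\circ\Lambda_i$ means first $\alpha$, then $\Lambda_i$).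
   Context: A representation of $H$ on an abelian group $B$ is a homomorphism $H\to\mathrm{Aut}(B)$. $\mathrm{Aut}(B)$ acts on representations by $\alpha^\psi(h)=\psi^{-1}\alpha(h)\psi$, and $\alpha\sim\beta$ means $\alpha^\psi=\beta$ for some $\psi\in\mathrm{Aut}(B)$. An abelian $p$-group is homocyclic if it is a direct product of cyclic groups of the same order. Maps are composed left to right. *)

theory Defs
  imports "HOL-Algebra.Algebra"
begin

text \<open>Abelian groups are written multiplicatively (HOL-Algebra), so "pA" becomes
  the set of p-th powers and "A_1 (+) ... (+) A_k" an internal direct product.\<close>

definition int_dirprod :: "('a, 'b) monoid_scheme \<Rightarrow> (nat \<Rightarrow> 'a set) \<Rightarrow> nat \<Rightarrow> bool" where
  "int_dirprod G A k \<longleftrightarrow> (\<forall>i<k. subgroup (A i) G) \<and>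
     bij_betw (\<lambda>x. finprod G x {..<k}) (PiE {..<k} A) (carrier G)"

definition dp_comp :: "('a, 'b) monoid_scheme \<Rightarrow> (nat \<Rightarrow> 'a set) \<Rightarrow> nat \<Rightarrow> nat \<Rightarrow> 'a \<Rightarrow> 'a" where
  "dp_comp G A k i g = (THE x. x \<in> PiE {..<k} A \<and> finprod G x {..<k} = g) i"

definition grp_exponent :: "('a, 'b) monoid_scheme \<Rightarrow> nat" where
  "grp_exponent G = Lcm (group.ord G ` carrier G)"

definition homocyclic :: "('a, 'b) monoid_scheme \<Rightarrow> 'a set \<Rightarrow> bool" where
  "homocyclic G S \<longleftrightarrow> (\<exists>n C. int_dirprod (G\<lparr>carrier := S\<rparr>) C n \<and>
      (\<forall>j<n. \<exists>g\<in>S. C j = generate G {g}) \<and>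
      (\<forall>j<n. \<forall>l<n. card (C j) = card (C l)))"

definition pmult :: "('a, 'b) monoid_scheme \<Rightarrow> nat \<Rightarrow> 'a set \<Rightarrow> 'a set" where
  "pmult G p S = (\<lambda>x. x [^]\<^bsub>G\<^esub> p) ` S"

definition quotp :: "('a, 'b) monoid_scheme \<Rightarrow> nat \<Rightarrow> 'a set \<Rightarrow> 'a set monoid" where
  "quotp G p S = (G\<lparr>carrier := S\<rparr>) Mod (pmult G p S)"

text \<open>Lambda_i: an automorphism phi of G, with diagonal entry u_ii = (i-th component of phi)
  restricted to A i, is sent to the induced map on A i / p A i,
  x + pA_i \<mapsto> u_ii(x) + pA_i.\<close>
definition Lambda_i :: "('a, 'b) monoid_scheme \<Rightarrow> nat \<Rightarrow> (nat \<Rightarrow> 'a set) \<Rightarrow> nat \<Rightarrow> nat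
    \<Rightarrow> ('a \<Rightarrow> 'a) \<Rightarrow> ('a set \<Rightarrow> 'a set)" where
  "Lambda_i G p A k i \<phi> = restrict (\<lambda>Y.
      r_coset G (pmult G p (A i)) (dp_comp G A k i (\<phi> (SOME x. x \<in> Y))))
      (carrier (quotp G p (A i)))"

definition rep_equiv :: "('h, 'c) monoid_scheme \<Rightarrow> ('k, 'd) monoid_scheme
    \<Rightarrow> ('h \<Rightarrow> 'k) \<Rightarrow> ('h \<Rightarrow> 'k) \<Rightarrow> bool" where
  "rep_equiv H K \<alpha> \<beta> \<longleftrightarrow> (\<exists>\<psi>\<in>carrier K. \<forall>h\<in>carrier H.
      \<beta> h = inv\<^bsub>K\<^esub> \<psi> \<otimes>\<^bsub>K\<^esub> \<alpha> h \<otimes>\<^bsub>K\<^esub> \<psi>)"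

end

theory Submission
  imports Defs "HOL-Computational_Algebra.Primes"
begin

lemma (in comm_group) hom_finprod_gen:
  assumes h: "h \<in> hom G K" and KG: "comm_group K" and f: "f \<in> I \<rightarrow> carrier G"
  shows "h (finprod G f I) = finprod K (h \<circ> f) I"
  using f
proof -
  have K: "comm_monoid K" using KG comm_group_def by blast
  have h1: "h \<one> = \<one>\<^bsub>K\<^esub>" using hom_one[OF h] KG comm_group_def group_axioms by blast
  show ?thesis using f
proof (induct I rule: infinite_finite_induct)
  case (infinite A)
  then show ?case using comm_monoid.finprod_infinite[OF K, of A "h \<circ> f"] h1 by (simp add: o_def)
next
  case empty
  then show ?case using K h1 by (simp add: comm_monoid.finprod_empty)
next
  case (insert a A)
  then have fa: "f a \<in> carrier G" and fA: "f \<in> A \<rightarrow> carrier G" by auto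
  have hfa: "(h \<circ> f) \<in> insert a A \<rightarrow> carrier K" using h insert.prems by (auto simp: hom_def)
  have "h (finprod G f (insert a A)) = h (f a \<otimes> finprod G f A)"
    using insert fa fA by simp
  also have "\<dots> = h (f a) \<otimes>\<^bsub>K\<^esub> h (finprod G f A)"
    using h fa fA by (simp add: hom_mult)
  also have "\<dots> = finprod K (h \<circ> f) (insert a A)"
    using insert hfa by (simp add: comm_monoid.finprod_insert[OF K] fA o_def)
  finally show ?case .
qed
qed

lemma (in comm_group) finprod_in_subgroup:
  assumes M: "subgroup M G" and f: "f \<in> I \<rightarrow> M"
  shows "finprod G f I \<in> M"
  using f
proof (induct I rule: infinite_finite_induct)
  case (infinite A)
  then show ?case using subgroup.one_closed[OF M] by simp
next
  case empty
  then show ?case using subgroup.one_closed[OF M] by simp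
next
  case (insert a A)
  have sub: "M \<subseteq> carrier G" using M subgroup.subset by blast
  have fA: "f \<in> A \<rightarrow> carrier G" "f a \<in> carrier G" using insert sub by auto
  then show ?case using insert subgroup.m_closed[OF M] by auto
qed

context comm_group
begin

lemma dp_basic:
  assumes "int_dirprod G A k"
  shows "\<And>i. i < k \<Longrightarrow> subgroup (A i) G"
    and "bij_betw (\<lambda>x. finprod G x {..<k}) (PiE {..<k} A) (carrier G)"
  using assms unfolding int_dirprod_def by auto

lemma dp_comp_eq:
  assumes D: "int_dirprod G A k" and f: "f \<in> PiE {..<k} A"
  shows "dp_comp G A k i (finprod G f {..<k}) = f i"
proof -
  have inj: "inj_on (\<lambda>x. finprod G x {..<k}) (PiE {..<k} A)"
    using dp_basic(2)[OF D] bij_betw_def by blast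
  have "(THE x. x \<in> PiE {..<k} A \<and> finprod G x {..<k} = finprod G f {..<k}) = f"
    by (rule the_equality) (use f inj in \<open>auto simp: inj_on_def\<close>)
  then show ?thesis unfolding dp_comp_def by simp
qed

lemma dp_decomp:
  assumes D: "int_dirprod G A k" and x: "x \<in> carrier G"
  shows "(\<lambda>i\<in>{..<k}. dp_comp G A k i x) \<in> PiE {..<k} A"
    and "finprod G (\<lambda>i. dp_comp G A k i x) {..<k} = x"
proof -
  obtain f where f: "f \<in> PiE {..<k} A" "finprod G f {..<k} = x"
    using dp_basic(2)[OF D] x unfolding bij_betw_def by (metis imageE)
  have e: "\<And>i. i < k \<Longrightarrow> dp_comp G A k i x = f i" using dp_comp_eq[OF D f(1)] f(2) by simp
  have "(\<lambda>i\<in>{..<k}. dp_comp G A k i x) = f"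
    using f(1) e by (auto simp: PiE_def extensional_def)
  then show "(\<lambda>i\<in>{..<k}. dp_comp G A k i x) \<in> PiE {..<k} A" using f by simp
  have sub: "\<And>i. i < k \<Longrightarrow> A i \<subseteq> carrier G" using dp_basic(1)[OF D] subgroup.subset by blast
  have "finprod G (\<lambda>i. dp_comp G A k i x) {..<k} = finprod G f {..<k}"
    apply (rule finprod_cong')
    using f(1) e sub by (auto simp: PiE_def Pi_def)
  then show "finprod G (\<lambda>i. dp_comp G A k i x) {..<k} = x" using f by simp
qed

lemma dp_comp_in:
  assumes D: "int_dirprod G A k" and x: "x \<in> carrier G" and i: "i < k"
  shows "dp_comp G A k i x \<in> A i"
  using dp_decomp(1)[OF D x] i by (auto simp: PiE_def Pi_def)

lemma dp_sub:
  assumes D: "int_dirprod G A k" and i: "i < k"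
  shows "A i \<subseteq> carrier G"
  using dp_basic(1)[OF D i] subgroup.subset by blast

lemma dp_comp_carrier:
  assumes D: "int_dirprod G A k" and x: "x \<in> carrier G" and i: "i < k"
  shows "dp_comp G A k i x \<in> carrier G"
  using dp_comp_in[OF assms] dp_sub[OF D i] by blast

lemma dp_comp_mult:
  assumes D: "int_dirprod G A k" and x: "x \<in> carrier G" and y: "y \<in> carrier G" and i: "i < k"
  shows "dp_comp G A k i (x \<otimes> y) = dp_comp G A k i x \<otimes> dp_comp G A k i y"
proof -
  let ?f = "\<lambda>j\<in>{..<k}. dp_comp G A k j x \<otimes> dp_comp G A k j y"
  have f: "?f \<in> PiE {..<k} A"
    using dp_comp_in[OF D x] dp_comp_in[OF D y] subgroup.m_closed[OF dp_basic(1)[OF D]]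
    by (auto simp: PiE_def Pi_def)
  have cx: "(\<lambda>j. dp_comp G A k j x) \<in> {..<k} \<rightarrow> carrier G" using dp_comp_carrier[OF D x] by auto
  have cy: "(\<lambda>j. dp_comp G A k j y) \<in> {..<k} \<rightarrow> carrier G" using dp_comp_carrier[OF D y] by auto
  have "finprod G ?f {..<k} = finprod G (\<lambda>j. dp_comp G A k j x \<otimes> dp_comp G A k j y) {..<k}"
    by (rule finprod_cong') (use cx cy in auto)
  also have "\<dots> = x \<otimes> y" using finprod_multf[OF cx cy] dp_decomp(2)[OF D x] dp_decomp(2)[OF D y] by simp
  finally have "dp_comp G A k i (x \<otimes> y) = ?f i" using dp_comp_eq[OF D f] by simp
  then show ?thesis using i by simp
qed

lemma dp_comp_hom:
  assumes D: "int_dirprod G A k" and i: "i < k"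
  shows "dp_comp G A k i \<in> hom G G"
  unfolding hom_def using dp_comp_carrier[OF D _ i] dp_comp_mult[OF D _ _ i] by auto

lemma dp_comp_single:
  assumes D: "int_dirprod G A k" and i: "i < k" and x: "x \<in> A i" and j: "j < k"
  shows "dp_comp G A k j x = (if j = i then x else \<one>)"
proof -
  let ?f = "\<lambda>j\<in>{..<k}. if j = i then x else \<one>"
  have f: "?f \<in> PiE {..<k} A"
    using x dp_basic(1)[OF D] subgroup.one_closed by (auto simp: PiE_def Pi_def)
  have xc: "x \<in> carrier G" using x dp_sub[OF D i] by blast
  have "finprod G ?f {..<k} = finprod G (\<lambda>j. if j = i then x else \<one>) {..<k}"
    by (rule finprod_cong') (use xc in auto)
  also have "\<dots> = x" using finprod_singleton_swap[of i "{..<k}" "\<lambda>_. x"] i xc by auto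
  finally show ?thesis using dp_comp_eq[OF D f, of j] j by simp
qed

lemma dp_in_subgroup:
  assumes D: "int_dirprod G A k" and M: "subgroup M G" and x: "x \<in> carrier G"
    and c: "\<And>i. i < k \<Longrightarrow> dp_comp G A k i x \<in> M"
  shows "x \<in> M"
  using finprod_in_subgroup[OF M, of "\<lambda>i. dp_comp G A k i x" "{..<k}"] c dp_decomp(2)[OF D x]
  by auto

end

locale L38 = comm_group +
  fixes A :: "nat \<Rightarrow> 'a set" and k p :: nat
  assumes fin: "finite (carrier G)" and pr: "Factorial_Ring.prime p"
    and pg: "\<exists>n. order G = p ^ n"
    and D: "int_dirprod G A k"
    and homo: "\<forall>i<k. A i \<noteq> {\<one>} \<and> homocyclic G (A i)"
    and ed: "\<forall>i<k. \<forall>j<k. i \<noteq> j \<longrightarrow> grp_exponent (G\<lparr>carrier := A i\<rparr>) \<noteq> grp_exponent (G\<lparr>carrier := A j\<rparr>)"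
begin

abbreviation "P i \<equiv> pmult G p (A i)"
abbreviation "GS i \<equiv> G\<lparr>carrier := A i\<rparr>"
abbreviation "ex i \<equiv> grp_exponent (GS i)"
abbreviation "cp i \<equiv> dp_comp G A k i"

lemma Asub: "i < k \<Longrightarrow> subgroup (A i) G"
  using dp_basic(1)[OF D] .

lemma Acar: "i < k \<Longrightarrow> A i \<subseteq> carrier G"
  using dp_sub[OF D] .

lemma GS_comm: assumes "i < k" shows "comm_group (GS i)"
proof -
  have "group (GS i)" using subgroup.subgroup_is_group[OF Asub[OF assms]] is_group by blast
  then show ?thesis
    by (rule group.group_comm_groupI) (use m_comm Acar[OF assms] in auto)
qed

lemma p_pos: "p > 0" using pr prime_gt_0_nat by blast

lemma Apow: assumes i: "i < k" and x: "x \<in> A i" shows "x [^] (n::nat) \<in> A i"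
proof -
  interpret Gi: comm_group "GS i" using GS_comm[OF i] .
  have "x [^]\<^bsub>GS i\<^esub> n \<in> A i" using Gi.nat_pow_closed[of x n] x by simp
  then show ?thesis using nat_pow_consistent[of x n "A i"] by simp
qed

lemma P_sub_A: "i < k \<Longrightarrow> P i \<subseteq> A i"
  unfolding pmult_def using Apow by blast

lemma powp_in_P: "x \<in> A i \<Longrightarrow> x [^] p \<in> P i"
  unfolding pmult_def by blast

lemma P_subgroup: assumes i: "i < k" shows "subgroup (P i) G"
proof (rule subgroupI)
  show "P i \<subseteq> carrier G" using P_sub_A[OF i] Acar[OF i] by blast
  show "P i \<noteq> {}" unfolding pmult_def using subgroup.one_closed[OF Asub[OF i]] by blast
next
  fix a assume "a \<in> P i"
  then obtain w where w: "w \<in> A i" "a = w [^] p" unfolding pmult_def by blast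
  have wc: "w \<in> carrier G" using w Acar[OF i] by blast
  have "inv a = (inv w) [^] p" using w wc nat_pow_inv by simp
  moreover have "inv w \<in> A i" using subgroup.m_inv_closed[OF Asub[OF i] w(1)] .
  ultimately show "inv a \<in> P i" unfolding pmult_def by blast
next
  fix a b assume "a \<in> P i" "b \<in> P i"
  then obtain w v where w: "w \<in> A i" "a = w [^] p" "v \<in> A i" "b = v [^] p" unfolding pmult_def by blast
  have wc: "w \<in> carrier G" "v \<in> carrier G" using w Acar[OF i] by auto
  have "a \<otimes> b = (w \<otimes> v) [^] p" using w wc pow_mult_distrib m_comm by simp
  moreover have "w \<otimes> v \<in> A i" using subgroup.m_closed[OF Asub[OF i]] w by blast
  ultimately show "a \<otimes> b \<in> P i" unfolding pmult_def by blast
qed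

lemma P_subgroup_GS: "i < k \<Longrightarrow> subgroup (P i) (GS i)"
  using subgroup_incl P_subgroup Asub P_sub_A by blast

lemma ordGS: assumes i: "i < k" and x: "x \<in> A i" shows "group.ord (GS i) x = ord x"
proof -
  interpret Gi: comm_group "GS i" using GS_comm[OF i] .
  have xc: "x \<in> carrier G" using x Acar[OF i] by blast
  have "Gi.ord x dvd n \<longleftrightarrow> ord x dvd n" for n
  proof -
    have e: "x [^]\<^bsub>GS i\<^esub> n = x [^] n" using nat_pow_consistent[of x n "A i"] by (rule sym)
    have "Gi.ord x dvd n \<longleftrightarrow> x [^]\<^bsub>GS i\<^esub> n = \<one>\<^bsub>GS i\<^esub>" using Gi.pow_eq_id[of x n] x by simp
    also have "\<dots> \<longleftrightarrow> x [^] n = \<one>" using e by simp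
    also have "\<dots> \<longleftrightarrow> ord x dvd n" by (rule pow_eq_id[OF xc])
    finally show ?thesis .
  qed
  note eq = this
  have "Gi.ord x dvd ord x" using eq[of "ord x"] by simp
  moreover have "ord x dvd Gi.ord x" using eq[of "Gi.ord x"] by simp
  ultimately show ?thesis by (rule dvd_antisym)
qed

lemma order_ppow: "\<exists>n. order G = p ^ n" using pg .

lemma ord_ppow: assumes x: "x \<in> carrier G" shows "\<exists>c. ord x = p ^ c"
proof -
  obtain n where n: "order G = p ^ n" using pg by blast
  have "ord x dvd order G" by (rule ord_dvd_group_order[OF x])
  then have "ord x dvd p ^ n" using n by simp
  then obtain c where "c \<le> n" "ord x = p ^ c" using divides_primepow_nat[OF pr, of "ord x" n] by auto
  then show ?thesis by blast
qed

lemma ex_kill: assumes i: "i < k" and x: "x \<in> A i" shows "x [^] ex i = \<one>"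
proof -
  have xc: "x \<in> carrier G" using x Acar[OF i] by blast
  have "ord x \<in> group.ord (GS i) ` A i" using ordGS[OF i x] x by (metis image_eqI)
  then have "ord x dvd Lcm (group.ord (GS i) ` A i)" by (rule dvd_Lcm)
  then have "ord x dvd ex i" unfolding grp_exponent_def by simp
  then show ?thesis by (rule pow_eq_id[OF xc, THEN iffD2])
qed

lemma ex_ppow: assumes i: "i < k" shows "\<exists>c. ex i = p ^ c"
proof -
  obtain n where n: "order G = p ^ n" using pg by blast
  have "\<forall>b \<in> group.ord (GS i) ` A i. b dvd p ^ n"
  proof
    fix b assume "b \<in> group.ord (GS i) ` A i"
    then obtain x where x: "x \<in> A i" "b = group.ord (GS i) x" by blast
    then show "b dvd p ^ n" using ordGS[OF i x(1)] ord_dvd_group_order[of x] Acar[OF i] n by auto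
  qed
  then have "ex i dvd p ^ n" unfolding grp_exponent_def by (simp add: Lcm_least)
  then show ?thesis using divides_primepow_nat[OF pr] by blast
qed

end

lemma powGS[simp]: "x [^]\<^bsub>G\<lparr>carrier := H\<rparr>\<^esub> (n::nat) = x [^]\<^bsub>G\<^esub> n"
  by (simp add: nat_pow_def)

lemma rcosGS[simp]: "r_coset (G\<lparr>carrier := H\<rparr>) S x = r_coset G S x"
  by (simp add: r_coset_def)

context L38
begin

lemma homo_data: assumes i: "i < k"
  shows "\<exists>n C g. int_dirprod (GS i) C n \<and> (\<forall>l<n. g l \<in> A i \<and> C l = generate G {g l})
     \<and> (\<forall>l<n. \<forall>l'<n. card (C l) = card (C l'))"
proof -
  obtain n C where nC: "int_dirprod (GS i) C n" "\<forall>j<n. \<exists>g\<in>A i. C j = generate G {g}"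
     "\<forall>j<n. \<forall>l<n. card (C j) = card (C l)"
    using homo i unfolding homocyclic_def by blast
  obtain g where "\<forall>j<n. g j \<in> A i \<and> C j = generate G {g j}" using nC(2) by metis
  then show ?thesis using nC by blast
qed

lemma subgroup_GS_from_G: "i < k \<Longrightarrow> subgroup M G \<Longrightarrow> M \<subseteq> A i \<Longrightarrow> subgroup M (GS i)"
  using subgroup_incl Asub by blast

lemma kill_sub: assumes i: "i < k" shows "subgroup {x \<in> A i. x [^] (q::nat) = \<one>} G"
proof (rule subgroupI)
  show "{x \<in> A i. x [^] q = \<one>} \<subseteq> carrier G" using Acar[OF i] by blast
  show "{x \<in> A i. x [^] q = \<one>} \<noteq> {}" using subgroup.one_closed[OF Asub[OF i]] by auto
next
  fix a assume a: "a \<in> {x \<in> A i. x [^] q = \<one>}"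
  then have ac: "a \<in> carrier G" using Acar[OF i] by blast
  have "inv a \<in> A i" using a subgroup.m_inv_closed[OF Asub[OF i]] by blast
  moreover have "(inv a) [^] q = \<one>" using a ac nat_pow_inv by simp
  ultimately show "inv a \<in> {x \<in> A i. x [^] q = \<one>}" by blast
next
  fix a b assume a: "a \<in> {x \<in> A i. x [^] q = \<one>}" and b: "b \<in> {x \<in> A i. x [^] q = \<one>}"
  then have c: "a \<in> carrier G" "b \<in> carrier G" using Acar[OF i] by auto
  have "a \<otimes> b \<in> A i" using a b subgroup.m_closed[OF Asub[OF i]] by blast
  moreover have "(a \<otimes> b) [^] q = \<one>" using a b c pow_mult_distrib m_comm by simp
  ultimately show "a \<otimes> b \<in> {x \<in> A i. x [^] q = \<one>}" by blast
qed

context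
  fixes i n C g
  assumes i: "i < k" and DC: "int_dirprod (GS i) C n"
    and gC: "\<forall>l<n. g l \<in> A i \<and> C l = generate G {g l}"
    and cardC: "\<forall>l<n. \<forall>l'<n. card (C l) = card (C l')"
begin

interpretation Gi: comm_group "GS i" using GS_comm[OF i] .

abbreviation "cq l \<equiv> dp_comp (GS i) C n l"

lemma gA: "l < n \<Longrightarrow> g l \<in> A i" using gC by blast
lemma gc: "l < n \<Longrightarrow> g l \<in> carrier G" using gA Acar[OF i] by blast

lemma Cpow: "l < n \<Longrightarrow> C l = {g l [^] t | t. t \<in> (UNIV::nat set)}"
  using gC generate_pow_on_finite_carrier[OF fin gc] by auto

lemma cardC_ord: "l < n \<Longrightarrow> card (C l) = ord (g l)"
  using gC generate_pow_card[OF gc] by auto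

lemma cq_pow: assumes x: "x \<in> A i" and l: "l < n" shows "\<exists>t::nat. cq l x = g l [^] t"
proof -
  have "cq l x \<in> C l" using Gi.dp_comp_in[OF DC _ l] x by simp
  then have "cq l x \<in> {g l [^] t | t. t \<in> (UNIV::nat set)}" using Cpow[OF l] by simp
  then show ?thesis by blast
qed

lemma kill_all: assumes l0: "l0 < n" and x: "x \<in> A i" shows "x [^] card (C l0) = \<one>"
proof -
  let ?M = "{x \<in> A i. x [^] card (C l0) = \<one>}"
  have M: "subgroup ?M (GS i)" using subgroup_GS_from_G[OF i kill_sub[OF i]] by blast
  have "x \<in> ?M"
  proof (rule Gi.dp_in_subgroup[OF DC M])
    show "x \<in> carrier (GS i)" using x by simp
    fix l assume l: "l < n"
    obtain t :: nat where t: "cq l x = g l [^] t" using cq_pow[OF x l] by blast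
    have cc: "card (C l0) = card (C l)" using cardC l l0 by blast
    have "(g l [^] t) [^] card (C l0) = (g l [^] card (C l)) [^] t"
      unfolding cc using gc[OF l] by (simp add: nat_pow_pow mult.commute)
    also have "\<dots> = \<one>" using cardC_ord[OF l] gc[OF l] by simp
    finally show "cq l x \<in> ?M" using t Apow[OF i gA[OF l]] by simp
  qed
  then show ?thesis by blast
qed

lemma ex_dvd_card: assumes l0: "l0 < n" shows "ex i dvd card (C l0)"
proof -
  have "\<forall>b \<in> group.ord (GS i) ` A i. b dvd card (C l0)"
  proof
    fix b assume "b \<in> group.ord (GS i) ` A i"
    then obtain x where x: "x \<in> A i" "b = group.ord (GS i) x" by blast
    have xc: "x \<in> carrier G" using x Acar[OF i] by blast
    have "ord x dvd card (C l0)" using pow_eq_id[OF xc] kill_all[OF l0 x(1)] by simp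
    then show "b dvd card (C l0)" using ordGS[OF i x(1)] x by simp
  qed
  then show ?thesis unfolding grp_exponent_def by (simp add: Lcm_least)
qed

lemma small_pow_in_P:
  assumes z: "z \<in> A i" and dd: "d = p ^ c" and dlt: "d < ex i" and zd: "z [^] d = \<one>"
  shows "z \<in> P i"
proof (rule Gi.dp_in_subgroup[OF DC P_subgroup_GS[OF i]])
  show "z \<in> carrier (GS i)" using z by simp
  fix l assume l: "l < n"
  obtain t :: nat where t: "cq l z = g l [^] t" using cq_pow[OF z l] by blast
  have hom: "cq l \<in> hom (GS i) (GS i)" using Gi.dp_comp_hom[OF DC l] .
  have "cq l (z [^]\<^bsub>GS i\<^esub> d) = (cq l z) [^]\<^bsub>GS i\<^esub> d"
    using hom_nat_pow[OF hom] z Gi.is_group by simp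
  then have "cq l (z [^] d) = (cq l z) [^] d" by simp
  moreover have "cq l \<one> = \<one>" using hom_one[OF hom] Gi.is_group by simp
  ultimately have "(g l [^] t) [^] d = \<one>" using zd t by simp
  then have "g l [^] (t * d) = \<one>" using gc[OF l] by (simp add: nat_pow_pow)
  then have dv: "ord (g l) dvd t * d" using pow_eq_id[OF gc[OF l]] by simp
  obtain b where b: "ord (g l) = p ^ b" using ord_ppow[OF gc[OF l]] by blast
  have "ex i \<le> card (C l)"
    using ex_dvd_card[OF l] cardC_ord[OF l] b p_pos dvd_imp_le by (metis zero_less_power)
  then have "p ^ c < p ^ b" using dd dlt b cardC_ord[OF l] by simp
  then have cb: "c < b" using power_less_imp_less_exp[of p c b] pr prime_gt_1_nat by blast
  have "p ^ Suc c dvd p ^ b" using cb by (intro le_imp_power_dvd) simp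
  then have "p ^ c * p dvd p ^ b" by (simp add: mult.commute)
  then have "p ^ c * p dvd t * p ^ c" using dv b dd dvd_trans by (metis mult.commute)
  then have "p dvd t" using p_pos by (simp add: mult.commute)
  then obtain t' where t': "t = p * t'" by blast
  have "cq l z = (g l [^] t') [^] p" using t t' gc[OF l] by (simp add: nat_pow_pow mult.commute)
  moreover have "g l [^] t' \<in> A i" using Apow[OF i gA[OF l]] .
  ultimately show "cq l z \<in> P i" using powp_in_P by simp
qed

lemma lift_aux:
  assumes psi: "\<psi> \<in> hom (quotp G p (A i)) (quotp G p (A i))"
  shows "\<exists>s. (\<forall>x\<in>A i. s x \<in> A i) \<and> (\<forall>x\<in>A i. \<forall>z\<in>A i. s (x \<otimes> z) = s x \<otimes> s z)
           \<and> (\<forall>x\<in>A i. \<psi> (P i #> x) = P i #> s x)"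
proof -
  let ?Q = "quotp G p (A i)"
  have Qdef: "?Q = GS i Mod P i" by (simp add: quotp_def)
  have Qc: "comm_group ?Q" using Gi.abelian_FactGroup[OF P_subgroup_GS[OF i]] Qdef by simp
  have Qg: "group ?Q" using Qc comm_group_def by blast
  have Nrm: "P i \<lhd> GS i" using Gi.normal_iff_subgroup P_subgroup_GS[OF i] by blast
  have pihom: "(\<lambda>a. P i #> a) \<in> hom (GS i) ?Q" using normal.r_coset_hom_Mod[OF Nrm] Qdef by simp
  have picar: "\<And>a. a \<in> A i \<Longrightarrow> P i #> a \<in> carrier ?Q" using pihom by (auto simp: hom_def)
  have Qcar: "carrier ?Q = (\<lambda>a. P i #> a) ` A i"
    by (auto simp: quotp_def FactGroup_def RCOSETS_def)
  have psic: "\<And>Y. Y \<in> carrier ?Q \<Longrightarrow> \<psi> Y \<in> carrier ?Q" using psi by (auto simp: hom_def)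
  have "\<forall>l<n. \<exists>yl. yl \<in> A i \<and> \<psi> (P i #> g l) = P i #> yl"
  proof (intro allI impI)
    fix l assume l: "l < n"
    have "\<psi> (P i #> g l) \<in> carrier ?Q" using psic picar gA l by blast
    then show "\<exists>yl. yl \<in> A i \<and> \<psi> (P i #> g l) = P i #> yl" using Qcar by auto
  qed
  then obtain y where y: "\<forall>l<n. y l \<in> A i \<and> \<psi> (P i #> g l) = P i #> y l" by metis
  have yc: "\<And>l. l < n \<Longrightarrow> y l \<in> carrier G" using y Acar[OF i] by blast
  define t where "t l x = (SOME t::nat. cq l x = g l [^] t)" for l x
  have tspec: "\<And>x l. x \<in> A i \<Longrightarrow> l < n \<Longrightarrow> cq l x = g l [^] t l x"
    unfolding t_def using cq_pow by (metis (mono_tags, lifting) someI_ex)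
  have wd0: "y l [^] b = y l [^] a" if l: "l < n" and ab: "a \<le> b" and e: "g l [^] a = g l [^] b" for l a b :: nat
  proof -
    have "g l [^] (b - a) = \<one>" using pow_eq_div2[OF gc[OF l] e[symmetric]] .
    then have "ord (g l) dvd b - a" using pow_eq_id[OF gc[OF l]] by simp
    then obtain m where m: "b - a = card (C l) * m" using cardC_ord[OF l] by (auto elim: dvdE)
    have "y l [^] (b - a) = (y l [^] card (C l)) [^] m" using m yc[OF l] by (simp add: nat_pow_pow)
    also have "\<dots> = \<one>" using kill_all[OF l, of "y l"] y l by simp
    finally have "y l [^] (b - a) = \<one>" .
    moreover have "y l [^] b = y l [^] a \<otimes> y l [^] (b - a)"
      using ab yc[OF l] by (simp add: nat_pow_mult)
    ultimately show ?thesis using yc[OF l] by simp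
  qed
  have wd: "y l [^] a = y l [^] b" if l: "l < n" and e: "g l [^] a = g l [^] b" for l a b :: nat
  proof (cases "a \<le> b")
    case True then show ?thesis using wd0[OF l True e] by simp
  next
    case False then show ?thesis using wd0[OF l _ e[symmetric]] by simp
  qed
  define s where "s x = finprod (GS i) (\<lambda>l. y l [^] t l x) {..<n}" for x
  have ypow: "\<And>l x. l < n \<Longrightarrow> y l [^] (t l x) \<in> A i" using Apow[OF i] y by blast
  have ypowf: "\<And>x. (\<lambda>l. y l [^] t l x) \<in> {..<n} \<rightarrow> carrier (GS i)" using ypow by auto
  have s_in: "\<forall>x\<in>A i. s x \<in> A i"
    unfolding s_def using Gi.finprod_closed[OF ypowf] by simp
  have s_mult: "\<forall>x\<in>A i. \<forall>z\<in>A i. s (x \<otimes> z) = s x \<otimes> s z"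
  proof (intro ballI)
    fix x z assume x: "x \<in> A i" and z: "z \<in> A i"
    have xz: "x \<otimes> z \<in> A i" using subgroup.m_closed[OF Asub[OF i] x z] .
    have each: "y l [^] t l (x \<otimes> z) = y l [^] t l x \<otimes> y l [^] t l z" if l: "l < n" for l
    proof -
      have "g l [^] t l (x \<otimes> z) = cq l (x \<otimes> z)" using tspec[OF xz l] by simp
      also have "\<dots> = cq l x \<otimes> cq l z" using Gi.dp_comp_mult[OF DC _ _ l, of x z] x z by simp
      also have "\<dots> = g l [^] (t l x + t l z)" using tspec[OF x l] tspec[OF z l] gc[OF l] by (simp add: nat_pow_mult)
      finally have "y l [^] t l (x \<otimes> z) = y l [^] (t l x + t l z)" using wd[OF l] by blast
      then show ?thesis using yc[OF l] by (simp add: nat_pow_mult)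
    qed
    have "s (x \<otimes> z) = finprod (GS i) (\<lambda>l. y l [^] t l x \<otimes>\<^bsub>GS i\<^esub> y l [^] t l z) {..<n}"
      unfolding s_def by (rule Gi.finprod_cong') (use each ypow subgroup.m_closed[OF Asub[OF i]] in auto)
    also have "\<dots> = s x \<otimes> s z" unfolding s_def using Gi.finprod_multf[OF ypowf ypowf] by simp
    finally show "s (x \<otimes> z) = s x \<otimes> s z" .
  qed
  have s_eq: "\<forall>x\<in>A i. \<psi> (P i #> x) = P i #> s x"
  proof
    fix x assume x: "x \<in> A i"
    have gpf: "(\<lambda>l. g l [^] t l x) \<in> {..<n} \<rightarrow> carrier (GS i)" using Apow[OF i gA] by auto
    have "x = finprod (GS i) (\<lambda>l. cq l x) {..<n}" using Gi.dp_decomp(2)[OF DC, of x] x by simp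
    also have "\<dots> = finprod (GS i) (\<lambda>l. g l [^] t l x) {..<n}"
      by (rule Gi.finprod_cong') (use tspec[OF x] gpf in auto)
    finally have xe: "x = finprod (GS i) (\<lambda>l. g l [^] t l x) {..<n}" .
    have "P i #> x = finprod ?Q (\<lambda>l. P i #> (g l [^] t l x)) {..<n}"
      using Gi.hom_finprod_gen[OF pihom Qc gpf] xe by (simp add: o_def)
    moreover have f1: "(\<lambda>l. P i #> (g l [^] t l x)) \<in> {..<n} \<rightarrow> carrier ?Q" using picar Apow[OF i gA] by auto
    ultimately have "\<psi> (P i #> x) = finprod ?Q (\<lambda>l. \<psi> (P i #> (g l [^] t l x))) {..<n}"
      using comm_group.hom_finprod_gen[OF Qc psi Qc f1] by (simp add: o_def)
    also have "\<dots> = finprod ?Q (\<lambda>l. P i #> (y l [^] t l x)) {..<n}"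
    proof (rule comm_monoid.finprod_cong')
      show "comm_monoid ?Q" using Qc comm_group_def by blast
      show "(\<lambda>l. P i #> (y l [^] t l x)) \<in> {..<n} \<rightarrow> carrier ?Q" using picar ypow by auto
      fix l assume "l \<in> {..<n}"
      then have l: "l < n" by simp
      have "P i #> (g l [^] t l x) = (P i #> g l) [^]\<^bsub>?Q\<^esub> t l x"
        using hom_nat_pow[OF pihom _ Gi.is_group Qg, of "g l" "t l x"] gA[OF l] by simp
      then have "\<psi> (P i #> (g l [^] t l x)) = (\<psi> (P i #> g l)) [^]\<^bsub>?Q\<^esub> t l x"
        using hom_nat_pow[OF psi _ Qg Qg] picar[OF gA[OF l]] by simp
      also have "\<dots> = (P i #> y l) [^]\<^bsub>?Q\<^esub> t l x" using y l by simp
      also have "\<dots> = P i #> (y l [^] t l x)"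
        using hom_nat_pow[OF pihom _ Gi.is_group Qg, of "y l" "t l x"] y l by simp
      finally show "\<psi> (P i #> (g l [^] t l x)) = P i #> (y l [^] t l x)" .
    qed simp
    also have "\<dots> = P i #> s x"
      using Gi.hom_finprod_gen[OF pihom Qc ypowf] unfolding s_def by (simp add: o_def)
    finally show "\<psi> (P i #> x) = P i #> s x" .
  qed
  show ?thesis using s_in s_mult s_eq by blast
qed

end

lemma small_in_P:
  assumes i: "i < k" and z: "z \<in> A i" and dd: "d = p ^ c" and dlt: "d < ex i" and zd: "z [^] d = \<one>"
  shows "z \<in> P i"
proof -
  obtain n C g where h: "int_dirprod (GS i) C n" "\<forall>l<n. g l \<in> A i \<and> C l = generate G {g l}"
     "\<forall>l<n. \<forall>l'<n. card (C l) = card (C l')" using homo_data[OF i] by blast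
  show ?thesis using small_pow_in_P[OF i h z dd dlt zd] .
qed

lemma lift:
  assumes i: "i < k" and psi: "\<psi> \<in> hom (quotp G p (A i)) (quotp G p (A i))"
  shows "\<exists>s. (\<forall>x\<in>A i. s x \<in> A i) \<and> (\<forall>x\<in>A i. \<forall>z\<in>A i. s (x \<otimes> z) = s x \<otimes> s z)
           \<and> (\<forall>x\<in>A i. \<psi> (P i #> x) = P i #> s x)"
proof -
  obtain n C g where h: "int_dirprod (GS i) C n" "\<forall>l<n. g l \<in> A i \<and> C l = generate G {g l}"
     "\<forall>l<n. \<forall>l'<n. card (C l) = card (C l')" using homo_data[OF i] by blast
  show ?thesis using lift_aux[OF i h psi] .
qed

end

context L38
begin

lemma cp_in: "x \<in> carrier G \<Longrightarrow> i < k \<Longrightarrow> cp i x \<in> A i" using dp_comp_in[OF D] .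
lemma cp_car: "x \<in> carrier G \<Longrightarrow> i < k \<Longrightarrow> cp i x \<in> carrier G" using dp_comp_carrier[OF D] .
lemma cp_hom: "i < k \<Longrightarrow> cp i \<in> hom G G" using dp_comp_hom[OF D] .
lemma cp_single: "i < k \<Longrightarrow> x \<in> A i \<Longrightarrow> j < k \<Longrightarrow> cp j x = (if j = i then x else \<one>)"
  using dp_comp_single[OF D] .
lemma cp_mult: "x \<in> carrier G \<Longrightarrow> y \<in> carrier G \<Longrightarrow> i < k \<Longrightarrow> cp i (x \<otimes> y) = cp i x \<otimes> cp i y"
  using dp_comp_mult[OF D] .

lemma hom_pow_G: "u \<in> hom G G \<Longrightarrow> x \<in> carrier G \<Longrightarrow> u (x [^] (n::nat)) = u x [^] n"
  by (rule hom_nat_pow[OF _ _ is_group is_group])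
lemma hom_one_G: "u \<in> hom G G \<Longrightarrow> u \<one> = \<one>"
  by (rule hom_one[OF _ is_group is_group])
lemma group_hom_G: "u \<in> hom G G \<Longrightarrow> group_hom G G u"
  unfolding group_hom_def group_hom_axioms_def using is_group by simp
lemma hom_inv_G: "u \<in> hom G G \<Longrightarrow> x \<in> carrier G \<Longrightarrow> u (inv x) = inv (u x)"
  by (rule group_hom.hom_inv[OF group_hom_G])
lemma hom_car: "u \<in> hom G G \<Longrightarrow> x \<in> carrier G \<Longrightarrow> u x \<in> carrier G"
  by (auto simp: hom_def)
lemma hom_mult_G: "u \<in> hom G G \<Longrightarrow> x \<in> carrier G \<Longrightarrow> y \<in> carrier G \<Longrightarrow> u (x \<otimes> y) = u x \<otimes> u y"
  by (auto simp: hom_def)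

lemma hom_comp_G: "u \<in> hom G G \<Longrightarrow> v \<in> hom G G \<Longrightarrow> (\<lambda>x. v (u x)) \<in> hom G G"
  by (auto simp: hom_def Pi_def)

lemma ex_cases: "i < k \<Longrightarrow> j < k \<Longrightarrow> i \<noteq> j \<Longrightarrow> ex i < ex j \<or> ex j < ex i"
  using ed by (meson linorder_neqE_nat)

lemma hom_P: assumes i: "i < k" and v: "v \<in> hom G G" and vA: "\<And>x. x \<in> A j \<Longrightarrow> v x \<in> A i"
  and j: "j < k" and w: "w \<in> P j" shows "v w \<in> P i"
proof -
  obtain a where a: "a \<in> A j" "w = a [^] p" using w unfolding pmult_def by blast
  have "v w = v a [^] p" using a hom_pow_G[OF v] Acar[OF j] by blast
  then show ?thesis using vA[OF a(1)] powp_in_P by simp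
qed

lemma CT:
  assumes i: "i < k" and j: "j < k" and ij: "i \<noteq> j" and u: "u \<in> hom G G" and v: "v \<in> hom G G"
    and uA: "\<And>x. x \<in> A i \<Longrightarrow> u x \<in> A j" and vA: "\<And>x. x \<in> A j \<Longrightarrow> v x \<in> A i"
    and x: "x \<in> A i"
  shows "v (u x) \<in> P i"
proof -
  have xc: "x \<in> carrier G" using x Acar[OF i] by blast
  have ux: "u x \<in> A j" using uA[OF x] .
  have uxc: "u x \<in> carrier G" using ux Acar[OF j] by blast
  consider "ex i < ex j" | "ex j < ex i" using ex_cases[OF i j ij] by blast
  then show ?thesis
  proof cases
    case 1
    obtain c where c: "ex i = p ^ c" using ex_ppow[OF i] by blast
    have "u x [^] ex i = u (x [^] ex i)" using hom_pow_G[OF u xc] by simp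
    also have "\<dots> = \<one>" using ex_kill[OF i x] hom_one_G[OF u] by simp
    finally have "u x \<in> P j" using small_in_P[OF j ux c 1] by blast
    then show ?thesis using hom_P[OF i v vA j] by blast
  next
    case 2
    obtain c where c: "ex j = p ^ c" using ex_ppow[OF j] by blast
    have "v (u x) [^] ex j = v (u x [^] ex j)" using hom_pow_G[OF v uxc] by simp
    also have "\<dots> = \<one>" using ex_kill[OF j ux] hom_one_G[OF v] by simp
    finally show ?thesis using small_in_P[OF i vA[OF ux] c 2] by blast
  qed
qed

lemma coset_eq_iff:
  assumes H: "subgroup H G" and a: "a \<in> carrier G" and b: "b \<in> carrier G"
  shows "H #> a = H #> b \<longleftrightarrow> a \<otimes> inv b \<in> H"
proof -
  have m: "(a \<in> H #> b) = (a \<otimes> inv b \<in> H)" using subgroup.rcos_module[OF H is_group b a] .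
  show ?thesis
  proof
    assume "H #> a = H #> b"
    then have "a \<in> H #> b" using rcos_self[OF a H] by simp
    then show "a \<otimes> inv b \<in> H" using m by simp
  next
    assume "a \<otimes> inv b \<in> H"
    then have "a \<in> H #> b" using m by simp
    then show "H #> a = H #> b" using repr_independence[OF _ b H] by simp
  qed
qed

lemma Pc: "i < k \<Longrightarrow> P i \<subseteq> carrier G" using P_sub_A Acar by blast

lemma F1:
  assumes i: "i < k" and f: "f \<in> hom G G" and g: "g \<in> hom G G" and x: "x \<in> A i"
  shows "cp i (f (g x)) \<otimes> inv (cp i (f (cp i (g x)))) \<in> P i"
proof -
  have xc: "x \<in> carrier G" using x Acar[OF i] by blast
  define y where "y = g x"
  have yc: "y \<in> carrier G" unfolding y_def using hom_car[OF g xc] .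
  define c where "c = cp i y"
  have cA: "c \<in> A i" unfolding c_def using cp_in[OF yc i] .
  have cc: "c \<in> carrier G" using cA Acar[OF i] by blast
  define r where "r = y \<otimes> inv c"
  have rc: "r \<in> carrier G" unfolding r_def using yc cc by simp
  have "c \<otimes> (y \<otimes> inv c) = y \<otimes> (c \<otimes> inv c)" using m_lcomm[OF cc yc inv_closed[OF cc]] .
  then have yr: "y = c \<otimes> r" unfolding r_def using yc cc by simp
  define v where "v = (\<lambda>z. cp i (f z))"
  have v: "v \<in> hom G G" unfolding v_def using hom_comp_G[OF f cp_hom[OF i]] .
  have vA: "\<And>z. z \<in> carrier G \<Longrightarrow> v z \<in> A i" unfolding v_def using cp_in[OF _ i] hom_car[OF f] by blast
  have vc: "\<And>z. z \<in> carrier G \<Longrightarrow> v z \<in> carrier G" using hom_car[OF v] .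
  have "v y = v c \<otimes> v r" using yr hom_mult_G[OF v cc rc] by simp
  then have e: "v y \<otimes> inv (v c) = v r" using vc[OF cc] vc[OF rc]
    by (metis inv_closed l_inv l_one m_assoc m_comm)
  have "v r \<in> P i"
  proof -
    have "r = finprod G (\<lambda>j. cp j r) {..<k}" using dp_decomp(2)[OF D rc] by simp
    then have vr: "v r = finprod G (v \<circ> (\<lambda>j. cp j r)) {..<k}"
      using hom_finprod_gen[OF v comm_group_axioms, of "\<lambda>j. cp j r" "{..<k}"] cp_car[OF rc] by auto
    have "\<forall>j\<in>{..<k}. v (cp j r) \<in> P i"
    proof
      fix j assume "j \<in> {..<k}"
      then have j: "j < k" by simp
      have cpr: "cp j r = cp j y \<otimes> inv (cp j c)"
        unfolding r_def using cp_mult[OF yc _ j, of "inv c"] cc hom_inv_G[OF cp_hom[OF j] cc] by simp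
      show "v (cp j r) \<in> P i"
      proof (cases "j = i")
        case True
        then have "cp j r = \<one>" using cpr cp_single[OF i cA j] c_def cc by simp
        then show ?thesis using hom_one_G[OF v] subgroup.one_closed[OF P_subgroup[OF i]] by simp
      next
        case False
        then have "cp j r = cp j (g x)" using cpr cp_single[OF i cA j] y_def cp_car[OF yc j] by simp
        moreover have "v (cp j (g x)) \<in> P i"
        proof (rule CT[OF i j _ hom_comp_G[OF g cp_hom[OF j]] v _ _ x])
          show "i \<noteq> j" using False by simp
          show "\<And>z. z \<in> A i \<Longrightarrow> cp j (g z) \<in> A j" using cp_in[OF _ j] hom_car[OF g] Acar[OF i] by blast
          show "\<And>z. z \<in> A j \<Longrightarrow> v z \<in> A i" using vA Acar[OF j] by blast
        qed
        ultimately show ?thesis by simp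
      qed
    qed
    then have "(\<lambda>j. v (cp j r)) \<in> {..<k} \<rightarrow> P i" by blast
    from finprod_in_subgroup[OF P_subgroup[OF i] this] show ?thesis using vr by (simp add: o_def)
  qed
  then show ?thesis using e unfolding v_def c_def y_def by simp
qed

lemma Qdef: "quotp G p (A i) = GS i Mod P i" by (simp add: quotp_def)

lemma Q_comm: "i < k \<Longrightarrow> comm_group (quotp G p (A i))"
proof -
  assume i: "i < k"
  interpret Gi: comm_group "GS i" using GS_comm[OF i] .
  show ?thesis using Gi.abelian_FactGroup[OF P_subgroup_GS[OF i]] Qdef by simp
qed

lemma Q_group: "i < k \<Longrightarrow> group (quotp G p (A i))" using Q_comm comm_group_def by blast

lemma pi_hom: "i < k \<Longrightarrow> (\<lambda>a. P i #> a) \<in> hom (GS i) (quotp G p (A i))"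
proof -
  assume i: "i < k"
  interpret Gi: comm_group "GS i" using GS_comm[OF i] .
  have Nrm: "P i \<lhd> GS i" using Gi.normal_iff_subgroup P_subgroup_GS[OF i] by blast
  show ?thesis using normal.r_coset_hom_Mod[OF Nrm] Qdef by simp
qed

lemma Qcar: "carrier (quotp G p (A i)) = (\<lambda>a. P i #> a) ` A i"
  by (auto simp: quotp_def FactGroup_def RCOSETS_def)

lemma pi_car: "i < k \<Longrightarrow> a \<in> A i \<Longrightarrow> P i #> a \<in> carrier (quotp G p (A i))"
  using Qcar by blast

lemma pi_mult: "i < k \<Longrightarrow> a \<in> A i \<Longrightarrow> b \<in> A i \<Longrightarrow>
   (P i #> a) \<otimes>\<^bsub>quotp G p (A i)\<^esub> (P i #> b) = P i #> (a \<otimes> b)"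
  using pi_hom by (force simp: hom_def)

lemma Lam_eval:
  assumes i: "i < k" and phi: "\<phi> \<in> hom G G" and a: "a \<in> A i"
  shows "Lambda_i G p A k i \<phi> (P i #> a) = P i #> cp i (\<phi> a)"
proof -
  have ac: "a \<in> carrier G" using a Acar[OF i] by blast
  let ?x = "SOME x. x \<in> P i #> a"
  have aa: "a \<in> P i #> a" using rcos_self[OF ac P_subgroup[OF i]] .
  then have x: "?x \<in> P i #> a" by (rule someI)
  have xc: "?x \<in> carrier G" using x r_coset_subset_G[OF Pc[OF i] ac] by blast
  have xa: "?x \<otimes> inv a \<in> P i" using subgroup.rcos_module[OF P_subgroup[OF i] is_group ac xc] x by simp
  define v where "v = (\<lambda>z. cp i (\<phi> z))"
  have v: "v \<in> hom G G" unfolding v_def using hom_comp_G[OF phi cp_hom[OF i]] .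
  have vA: "\<And>z. z \<in> A i \<Longrightarrow> v z \<in> A i" unfolding v_def using cp_in[OF _ i] hom_car[OF phi] Acar[OF i] by blast
  have "v (?x \<otimes> inv a) \<in> P i" using hom_P[OF i v vA i xa] .
  moreover have "v (?x \<otimes> inv a) = v ?x \<otimes> inv (v a)" using hom_mult_G[OF v xc] hom_inv_G[OF v ac] ac by simp
  ultimately have "P i #> v ?x = P i #> v a"
    using coset_eq_iff[OF P_subgroup[OF i]] hom_car[OF v] xc ac by simp
  moreover have "Lambda_i G p A k i \<phi> (P i #> a) = P i #> v ?x"
    unfolding Lambda_i_def v_def using pi_car[OF i a] by simp
  ultimately show ?thesis unfolding v_def by simp
qed

lemma Lam_comp:
  assumes i: "i < k" and phi: "\<phi> \<in> hom G G" and psi: "\<psi> \<in> hom G G" and a: "a \<in> A i"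
  shows "Lambda_i G p A k i \<phi> (Lambda_i G p A k i \<psi> (P i #> a)) = P i #> cp i (\<phi> (\<psi> a))"
proof -
  have ac: "a \<in> carrier G" using a Acar[OF i] by blast
  have c1: "cp i (\<psi> a) \<in> A i" using cp_in[OF hom_car[OF psi ac] i] .
  have "Lambda_i G p A k i \<phi> (Lambda_i G p A k i \<psi> (P i #> a)) = P i #> cp i (\<phi> (cp i (\<psi> a)))"
    using Lam_eval[OF i psi a] Lam_eval[OF i phi c1] by simp
  also have "\<dots> = P i #> cp i (\<phi> (\<psi> a))"
  proof -
    have "cp i (\<phi> (\<psi> a)) \<otimes> inv (cp i (\<phi> (cp i (\<psi> a)))) \<in> P i" using F1[OF i phi psi a] .
    moreover have "cp i (\<phi> (\<psi> a)) \<in> carrier G"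
      using cp_car[OF hom_car[OF phi hom_car[OF psi ac]] i] .
    moreover have c1c: "cp i (\<psi> a) \<in> carrier G" using c1 Acar[OF i] by blast
    moreover have "cp i (\<phi> (cp i (\<psi> a))) \<in> carrier G"
      using cp_car[OF hom_car[OF phi c1c] i] .
    ultimately have "P i #> cp i (\<phi> (\<psi> a)) = P i #> cp i (\<phi> (cp i (\<psi> a)))"
      using coset_eq_iff[OF P_subgroup[OF i]] by simp
    then show ?thesis by simp
  qed
  finally show ?thesis .
qed

end

lemma Aut_carrier[simp]: "carrier (AutoGroup M) = auto M"
  by (simp add: AutoGroup_def)

lemma Aut_mult: "f \<in> auto M \<Longrightarrow> g \<in> auto M \<Longrightarrow> f \<otimes>\<^bsub>AutoGroup M\<^esub> g = compose (carrier M) f g"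
  by (simp add: AutoGroup_def BijGroup_def auto_def)

lemma Aut_one: "\<one>\<^bsub>AutoGroup M\<^esub> = (\<lambda>x\<in>carrier M. x)"
  by (simp add: AutoGroup_def BijGroup_def)

lemma auto_hom: "f \<in> auto M \<Longrightarrow> f \<in> hom M M" by (simp add: auto_def)

lemma (in group) auto_inverse:
  assumes f: "f \<in> auto G"
  shows "inv\<^bsub>AutoGroup G\<^esub> f \<in> auto G"
    and "\<And>x. x \<in> carrier G \<Longrightarrow> f ((inv\<^bsub>AutoGroup G\<^esub> f) x) = x"
    and "\<And>x. x \<in> carrier G \<Longrightarrow> (inv\<^bsub>AutoGroup G\<^esub> f) (f x) = x"
proof -
  interpret Au: group "AutoGroup G" by (rule AutoGroup)
  let ?g = "inv\<^bsub>AutoGroup G\<^esub> f"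
  show g: "?g \<in> auto G" using Au.inv_closed f by simp
  have "f \<otimes>\<^bsub>AutoGroup G\<^esub> ?g = \<one>\<^bsub>AutoGroup G\<^esub>" using Au.r_inv f by simp
  then have e1: "compose (carrier G) f ?g = (\<lambda>x\<in>carrier G. x)" using Aut_mult[OF f g] Aut_one by simp
  have "?g \<otimes>\<^bsub>AutoGroup G\<^esub> f = \<one>\<^bsub>AutoGroup G\<^esub>" using Au.l_inv f by simp
  then have e2: "compose (carrier G) ?g f = (\<lambda>x\<in>carrier G. x)" using Aut_mult[OF g f] Aut_one by simp
  fix x assume x: "x \<in> carrier G"
  show "f (?g x) = x" using fun_cong[OF e1, of x] x by (simp add: compose_def)
  show "?g (f x) = x" using fun_cong[OF e2, of x] x by (simp add: compose_def)
qed

context L38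
begin

lemma Lam_auto:
  assumes i: "i < k" and phi: "\<phi> \<in> auto G"
  shows "Lambda_i G p A k i \<phi> \<in> auto (quotp G p (A i))"
proof -
  let ?Q = "quotp G p (A i)"
  let ?L = "Lambda_i G p A k i"
  have ph: "\<phi> \<in> hom G G" using auto_hom[OF phi] .
  let ?g = "inv\<^bsub>AutoGroup G\<^esub> \<phi>"
  have g: "?g \<in> auto G" using auto_inverse(1)[OF phi] .
  have gh: "?g \<in> hom G G" using auto_hom[OF g] .
  have Lc: "\<And>f a. f \<in> hom G G \<Longrightarrow> a \<in> A i \<Longrightarrow> ?L f (P i #> a) \<in> carrier ?Q"
    using Lam_eval[OF i] pi_car[OF i] cp_in[OF _ i] hom_car Acar[OF i] by (metis subsetD)
  have Lcar: "\<And>f Y. f \<in> hom G G \<Longrightarrow> Y \<in> carrier ?Q \<Longrightarrow> ?L f Y \<in> carrier ?Q"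
    using Lc Qcar by force
  have hom: "?L \<phi> \<in> hom ?Q ?Q"
  proof (rule homI)
    fix Y assume "Y \<in> carrier ?Q" then show "?L \<phi> Y \<in> carrier ?Q" using Lcar[OF ph] by blast
  next
    fix Y Z assume Y: "Y \<in> carrier ?Q" and Z: "Z \<in> carrier ?Q"
    obtain a b where ab: "a \<in> A i" "Y = P i #> a" "b \<in> A i" "Z = P i #> b" using Y Z Qcar by auto
    have ac: "a \<in> carrier G" "b \<in> carrier G" using ab Acar[OF i] by auto
    have abA: "a \<otimes> b \<in> A i" using subgroup.m_closed[OF Asub[OF i]] ab by blast
    have "?L \<phi> (Y \<otimes>\<^bsub>?Q\<^esub> Z) = ?L \<phi> (P i #> (a \<otimes> b))" using pi_mult[OF i] ab by simp
    also have "\<dots> = P i #> cp i (\<phi> (a \<otimes> b))" using Lam_eval[OF i ph abA] .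
    also have "\<dots> = P i #> (cp i (\<phi> a) \<otimes> cp i (\<phi> b))"
      using hom_mult_G[OF ph ac] cp_mult[OF hom_car[OF ph ac(1)] hom_car[OF ph ac(2)] i] by simp
    also have "\<dots> = (P i #> cp i (\<phi> a)) \<otimes>\<^bsub>?Q\<^esub> (P i #> cp i (\<phi> b))"
      using pi_mult[OF i] cp_in[OF hom_car[OF ph] i] ac by simp
    also have "\<dots> = ?L \<phi> Y \<otimes>\<^bsub>?Q\<^esub> ?L \<phi> Z" using Lam_eval[OF i ph] ab by simp
    finally show "?L \<phi> (Y \<otimes>\<^bsub>?Q\<^esub> Z) = ?L \<phi> Y \<otimes>\<^bsub>?Q\<^esub> ?L \<phi> Z" .
  qed
  have inv1: "\<And>Y. Y \<in> carrier ?Q \<Longrightarrow> ?L ?g (?L \<phi> Y) = Y"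
  proof -
    fix Y assume "Y \<in> carrier ?Q"
    then obtain a where a: "a \<in> A i" "Y = P i #> a" using Qcar by auto
    have ac: "a \<in> carrier G" using a Acar[OF i] by auto
    have "?L ?g (?L \<phi> Y) = P i #> cp i (?g (\<phi> a))" using Lam_comp[OF i gh ph a(1)] a by simp
    also have "\<dots> = Y" using auto_inverse(3)[OF phi ac] cp_single[OF i a(1) i] a by simp
    finally show "?L ?g (?L \<phi> Y) = Y" .
  qed
  have inv2: "\<And>Y. Y \<in> carrier ?Q \<Longrightarrow> ?L \<phi> (?L ?g Y) = Y"
  proof -
    fix Y assume "Y \<in> carrier ?Q"
    then obtain a where a: "a \<in> A i" "Y = P i #> a" using Qcar by auto
    have ac: "a \<in> carrier G" using a Acar[OF i] by auto
    have "?L \<phi> (?L ?g Y) = P i #> cp i (\<phi> (?g a))" using Lam_comp[OF i ph gh a(1)] a by simp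
    also have "\<dots> = Y" using auto_inverse(2)[OF phi ac] cp_single[OF i a(1) i] a by simp
    finally show "?L \<phi> (?L ?g Y) = Y" .
  qed
  have bij: "bij_betw (?L \<phi>) (carrier ?Q) (carrier ?Q)"
    by (rule bij_betw_byWitness[of _ "?L ?g"]) (use inv1 inv2 Lcar[OF ph] Lcar[OF gh] in auto)
  have ext: "?L \<phi> \<in> extensional (carrier ?Q)" unfolding Lambda_i_def by simp
  show ?thesis unfolding auto_def Bij_def using hom bij ext by simp
qed

lemma Lam_hom:
  assumes i: "i < k"
  shows "Lambda_i G p A k i \<in> hom (AutoGroup G) (AutoGroup (quotp G p (A i)))"
proof (rule homI)
  let ?Q = "quotp G p (A i)"
  let ?L = "Lambda_i G p A k i"
  fix \<phi> assume "\<phi> \<in> carrier (AutoGroup G)"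
  then show "?L \<phi> \<in> carrier (AutoGroup ?Q)" using Lam_auto[OF i] by simp
next
  let ?Q = "quotp G p (A i)"
  let ?L = "Lambda_i G p A k i"
  fix \<phi> \<psi> assume phi: "\<phi> \<in> carrier (AutoGroup G)" and psi: "\<psi> \<in> carrier (AutoGroup G)"
  interpret Au: group "AutoGroup G" by (rule AutoGroup)
  have pa: "\<phi> \<in> auto G" "\<psi> \<in> auto G" using phi psi by auto
  have ph: "\<phi> \<in> hom G G" "\<psi> \<in> hom G G" using pa auto_hom by auto
  have pp: "\<phi> \<otimes>\<^bsub>AutoGroup G\<^esub> \<psi> \<in> auto G" using Au.m_closed phi psi by simp
  have pph: "\<phi> \<otimes>\<^bsub>AutoGroup G\<^esub> \<psi> \<in> hom G G" using auto_hom[OF pp] .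
  have m: "\<phi> \<otimes>\<^bsub>AutoGroup G\<^esub> \<psi> = compose (carrier G) \<phi> \<psi>" using Aut_mult[OF pa] .
  have "?L (\<phi> \<otimes>\<^bsub>AutoGroup G\<^esub> \<psi>) = compose (carrier ?Q) (?L \<phi>) (?L \<psi>)"
  proof (rule extensionalityI[of _ "carrier ?Q"])
    show "?L (\<phi> \<otimes>\<^bsub>AutoGroup G\<^esub> \<psi>) \<in> extensional (carrier ?Q)" unfolding Lambda_i_def by simp
    show "compose (carrier ?Q) (?L \<phi>) (?L \<psi>) \<in> extensional (carrier ?Q)" by (simp add: compose_def)
    fix Y assume "Y \<in> carrier ?Q"
    then obtain a where a: "a \<in> A i" "Y = P i #> a" using Qcar by auto
    have ac: "a \<in> carrier G" using a Acar[OF i] by auto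
    have "?L (\<phi> \<otimes>\<^bsub>AutoGroup G\<^esub> \<psi>) Y = P i #> cp i ((\<phi> \<otimes>\<^bsub>AutoGroup G\<^esub> \<psi>) a)"
      using Lam_eval[OF i pph a(1)] a by simp
    also have "\<dots> = P i #> cp i (\<phi> (\<psi> a))" using m ac by (simp add: compose_def)
    also have "\<dots> = ?L \<phi> (?L \<psi> Y)" using Lam_comp[OF i ph a(1)] a by simp
    also have "\<dots> = compose (carrier ?Q) (?L \<phi>) (?L \<psi>) Y" using \<open>Y \<in> carrier ?Q\<close> by (simp add: compose_def)
    finally show "?L (\<phi> \<otimes>\<^bsub>AutoGroup G\<^esub> \<psi>) Y = compose (carrier ?Q) (?L \<phi>) (?L \<psi>) Y" .
  qed
  then show "?L (\<phi> \<otimes>\<^bsub>AutoGroup G\<^esub> \<psi>) = ?L \<phi> \<otimes>\<^bsub>AutoGroup ?Q\<^esub> ?L \<psi>"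
    using Aut_mult[OF Lam_auto[OF i pa(1)] Lam_auto[OF i pa(2)]] by simp
qed

end

context L38
begin

lemma F3:
  assumes f: "f \<in> hom G G"
    and hyp: "\<And>j y. j < k \<Longrightarrow> y \<in> A j \<Longrightarrow> \<exists>a\<in>A j. cp j (f a) \<otimes> inv y \<in> P j"
  shows "f ` carrier G = carrier G"
proof -
  define M where "M = {x \<in> carrier G. \<exists>a\<in>carrier G. \<exists>w\<in>carrier G. x = f a \<otimes> w [^] p}"
  have fc: "\<And>a. a \<in> carrier G \<Longrightarrow> f a \<in> carrier G" using hom_car[OF f] .
  have Msub: "subgroup M G"
  proof (rule subgroupI)
    show "M \<subseteq> carrier G" unfolding M_def by blast
    have "\<one> = f \<one> \<otimes> \<one> [^] p" using hom_one_G[OF f] by simp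
    then show "M \<noteq> {}" unfolding M_def by blast
  next
    fix x assume "x \<in> M"
    then obtain a w where aw: "a \<in> carrier G" "w \<in> carrier G" "x = f a \<otimes> w [^] p" unfolding M_def by blast
    have "inv x = f (inv a) \<otimes> (inv w) [^] p"
      using aw fc hom_inv_G[OF f] nat_pow_inv inv_mult by simp
    then show "inv x \<in> M" unfolding M_def using aw fc by auto
  next
    fix x y assume "x \<in> M" "y \<in> M"
    then obtain a w b v where aw: "a \<in> carrier G" "w \<in> carrier G" "x = f a \<otimes> w [^] p"
      "b \<in> carrier G" "v \<in> carrier G" "y = f b \<otimes> v [^] p" unfolding M_def by blast
    have "x \<otimes> y = f (a \<otimes> b) \<otimes> (w \<otimes> v) [^] p"
      using aw fc hom_mult_G[OF f] pow_mult_distrib[OF m_comm] by (simp add: m_ac)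
    then show "x \<otimes> y \<in> M" unfolding M_def using aw fc by auto
  qed
  have fM: "\<And>a. a \<in> carrier G \<Longrightarrow> f a \<in> M"
  proof -
    fix a assume a: "a \<in> carrier G"
    have "f a = f a \<otimes> \<one> [^] p" using fc[OF a] by simp
    then show "f a \<in> M" unfolding M_def using a fc by blast
  qed
  have PM: "\<And>j. j < k \<Longrightarrow> P j \<subseteq> M"
  proof
    fix j x assume j: "j < k" and x: "x \<in> P j"
    then obtain w where w: "w \<in> A j" "x = w [^] p" unfolding pmult_def by blast
    have wc: "w \<in> carrier G" using w Acar[OF j] by blast
    have "x = f \<one> \<otimes> w [^] p" using w wc hom_one_G[OF f] by simp
    moreover have "x \<in> carrier G" using w wc by simp
    ultimately show "x \<in> M" unfolding M_def using wc by blast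
  qed
  have AM: "\<forall>j. j < k \<longrightarrow> A j \<subseteq> M"
  proof (intro allI)
    fix j0
    show "j0 < k \<longrightarrow> A j0 \<subseteq> M"
    proof (induction j0 rule: measure_induct_rule[where f = "\<lambda>j. ex j"])
      case (less j)
      show ?case
      proof (intro impI subsetI)
        assume j: "j < k"
        fix y assume y: "y \<in> A j"
        have yc: "y \<in> carrier G" using y Acar[OF j] by blast
        obtain a where a: "a \<in> A j" "cp j (f a) \<otimes> inv y \<in> P j" using hyp[OF j y] by blast
        have ac: "a \<in> carrier G" using a Acar[OF j] by blast
        define z where "z = f a \<otimes> inv y"
        have zc: "z \<in> carrier G" unfolding z_def using fc[OF ac] yc by simp
        have "z \<in> M"
        proof (rule dp_in_subgroup[OF D Msub zc])
          fix l assume l: "l < k"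
          have czl: "cp l z = cp l (f a) \<otimes> inv (cp l y)"
            unfolding z_def using cp_mult[OF fc[OF ac] _ l, of "inv y"] yc hom_inv_G[OF cp_hom[OF l] yc] by simp
          show "cp l z \<in> M"
          proof (cases "l = j")
            case True
            then show ?thesis using czl cp_single[OF j y l] a(2) PM[OF j] by auto
          next
            case False
            have czl2: "cp l z = cp l (f a)" using czl cp_single[OF j y l] False cp_car[OF fc[OF ac] l] by simp
            have fal: "cp l (f a) \<in> A l" using cp_in[OF fc[OF ac] l] .
            consider "ex l < ex j" | "ex j < ex l" using ex_cases[OF l j False] by blast
            then show ?thesis
            proof cases
              case 1
              then show ?thesis using less[of l] l czl2 fal by auto
            next
              case 2
              obtain c where c: "ex j = p ^ c" using ex_ppow[OF j] by blast
              have "cp l (f a) [^] ex j = cp l (f (a [^] ex j))"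
                using hom_pow_G[OF cp_hom[OF l] fc[OF ac]] hom_pow_G[OF f ac] by simp
              also have "\<dots> = \<one>" using ex_kill[OF j a(1)] hom_one_G[OF f] hom_one_G[OF cp_hom[OF l]] by simp
              finally have "cp l (f a) \<in> P l" using small_in_P[OF l fal c 2] by blast
              then show ?thesis using czl2 PM[OF l] by auto
            qed
          qed
        qed
        moreover have "y = inv z \<otimes> f a"
        proof -
          have "inv z = inv (inv y) \<otimes> inv (f a)" unfolding z_def using yc fc[OF ac] by (simp add: inv_mult m_comm)
          then have "inv z \<otimes> f a = y \<otimes> (inv (f a) \<otimes> f a)" using yc fc[OF ac] by (simp add: m_assoc)
          then show ?thesis using yc fc[OF ac] by simp
        qed
        ultimately show "y \<in> M" using fM[OF ac] subgroup.m_closed[OF Msub] subgroup.m_inv_closed[OF Msub] by metis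
      qed
    qed
  qed
  have allM: "\<And>x. x \<in> carrier G \<Longrightarrow> x \<in> M"
    using dp_in_subgroup[OF D Msub] cp_in AM by blast
  have iter: "\<And>x. x \<in> carrier G \<Longrightarrow> \<exists>a\<in>carrier G. \<exists>w\<in>carrier G. x = f a \<otimes> w [^] (p ^ n)" for n
  proof (induction n)
    case 0
    have "x = f \<one> \<otimes> x [^] (p ^ 0)" using hom_one_G[OF f] 0 by simp
    then show ?case using 0 by blast
  next
    case (Suc n)
    then obtain a w where aw: "a \<in> carrier G" "w \<in> carrier G" "x = f a \<otimes> w [^] (p ^ n)" by blast
    have "w \<in> M" using allM[OF aw(2)] .
    then obtain b v where bv: "b \<in> carrier G" "v \<in> carrier G" "w = f b \<otimes> v [^] p" unfolding M_def by blast
    have "w [^] (p ^ n) = f (b [^] (p ^ n)) \<otimes> v [^] (p ^ Suc n)"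
      using bv fc pow_mult_distrib[OF m_comm] hom_pow_G[OF f] by (simp add: nat_pow_pow mult.commute)
    then have "x = f (a \<otimes> b [^] (p ^ n)) \<otimes> v [^] (p ^ Suc n)"
      using aw bv fc hom_mult_G[OF f] by (simp add: m_assoc)
    then show ?case using aw bv by auto
  qed
  obtain N where N: "order G = p ^ N" using pg by blast
  show ?thesis
  proof
    show "f ` carrier G \<subseteq> carrier G" using fc by blast
    show "carrier G \<subseteq> f ` carrier G"
    proof
      fix x assume x: "x \<in> carrier G"
      obtain a w where aw: "a \<in> carrier G" "w \<in> carrier G" "x = f a \<otimes> w [^] (p ^ N)" using iter[OF x] by blast
      have "w [^] (p ^ N) = \<one>" using pow_order_eq_1[OF aw(2)] N by simp
      then show "x \<in> f ` carrier G" using aw fc by simp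
    qed
  qed
qed

end

context L38
begin

lemma P_pow_closed: assumes i: "i < k" and w: "w \<in> P i" shows "w [^] (n::nat) \<in> P i"
proof -
  obtain v where v: "v \<in> A i" "w = v [^] p" using w unfolding pmult_def by blast
  have vc: "v \<in> carrier G" using v Acar[OF i] by blast
  have "w [^] n = (v [^] n) [^] p" using v vc by (simp add: nat_pow_pow mult.commute)
  then show ?thesis using powp_in_P Apow[OF i v(1)] by simp
qed

context
  fixes H :: "('h, 'c) monoid_scheme" and \<alpha> \<beta> :: "'h \<Rightarrow> 'a \<Rightarrow> 'a" and s :: "nat \<Rightarrow> 'a \<Rightarrow> 'a"
    and m q :: nat
  assumes Hg: "group H" and Hf: "finite (carrier H)"
    and ah: "\<alpha> \<in> hom H (AutoGroup G)" and bh: "\<beta> \<in> hom H (AutoGroup G)"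
    and s_in: "\<forall>i<k. \<forall>x\<in>A i. s i x \<in> A i"
    and s_mult: "\<forall>i<k. \<forall>x\<in>A i. \<forall>z\<in>A i. s i (x \<otimes> z) = s i x \<otimes> s i z"
    and s_int: "\<forall>i<k. \<forall>h\<in>carrier H. \<forall>x\<in>A i. P i #> s i (cp i (\<beta> h x)) = P i #> cp i (\<alpha> h (s i x))"
    and s_surj: "\<forall>i<k. \<forall>y\<in>A i. \<exists>x\<in>A i. P i #> s i x = P i #> y"
    and s_coset: "\<forall>i<k. \<forall>a\<in>A i. \<forall>b\<in>A i. P i #> a = P i #> b \<longrightarrow> P i #> s i a = P i #> s i b"
    and mq: "order H * m = p * q + 1"
begin

interpretation Hgr: group H using Hg .
interpretation Au: group "AutoGroup G" by (rule AutoGroup)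

lemma a_auto: "h \<in> carrier H \<Longrightarrow> \<alpha> h \<in> auto G" using ah by (auto simp: hom_def)
lemma b_auto: "h \<in> carrier H \<Longrightarrow> \<beta> h \<in> auto G" using bh by (auto simp: hom_def)
lemma a_hom: "h \<in> carrier H \<Longrightarrow> \<alpha> h \<in> hom G G" using a_auto auto_hom by blast
lemma b_hom: "h \<in> carrier H \<Longrightarrow> \<beta> h \<in> hom G G" using b_auto auto_hom by blast

lemma a_mul: "h \<in> carrier H \<Longrightarrow> g \<in> carrier H \<Longrightarrow> x \<in> carrier G \<Longrightarrow> \<alpha> (h \<otimes>\<^bsub>H\<^esub> g) x = \<alpha> h (\<alpha> g x)"
proof -
  assume h: "h \<in> carrier H" and g: "g \<in> carrier H" and x: "x \<in> carrier G"
  have "\<alpha> (h \<otimes>\<^bsub>H\<^esub> g) = \<alpha> h \<otimes>\<^bsub>AutoGroup G\<^esub> \<alpha> g" using ah h g by (simp add: hom_mult)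
  also have "\<dots> = compose (carrier G) (\<alpha> h) (\<alpha> g)" using Aut_mult a_auto h g by blast
  finally show ?thesis using x by (simp add: compose_def)
qed

lemma b_mul: "h \<in> carrier H \<Longrightarrow> g \<in> carrier H \<Longrightarrow> x \<in> carrier G \<Longrightarrow> \<beta> (h \<otimes>\<^bsub>H\<^esub> g) x = \<beta> h (\<beta> g x)"
proof -
  assume h: "h \<in> carrier H" and g: "g \<in> carrier H" and x: "x \<in> carrier G"
  have "\<beta> (h \<otimes>\<^bsub>H\<^esub> g) = \<beta> h \<otimes>\<^bsub>AutoGroup G\<^esub> \<beta> g" using bh h g by (simp add: hom_mult)
  also have "\<dots> = compose (carrier G) (\<beta> h) (\<beta> g)" using Aut_mult b_auto h g by blast
  finally show ?thesis using x by (simp add: compose_def)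
qed

lemma b_one: "x \<in> carrier G \<Longrightarrow> \<beta> \<one>\<^bsub>H\<^esub> x = x"
proof -
  assume x: "x \<in> carrier G"
  have "\<beta> \<one>\<^bsub>H\<^esub> = \<one>\<^bsub>AutoGroup G\<^esub>" using hom_one[OF bh Hg Au.is_group] .
  then show ?thesis using x by (simp add: Aut_one)
qed

lemma b_inv: "h \<in> carrier H \<Longrightarrow> x \<in> carrier G \<Longrightarrow> \<beta> h (\<beta> (inv\<^bsub>H\<^esub> h) x) = x"
  using b_mul[of h "inv\<^bsub>H\<^esub> h" x] b_one by simp

lemma b_inv2: "h \<in> carrier H \<Longrightarrow> x \<in> carrier G \<Longrightarrow> \<beta> (inv\<^bsub>H\<^esub> h) (\<beta> h x) = x"
  using b_mul[of "inv\<^bsub>H\<^esub> h" h x] b_one by simp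

definition "S y = finprod G (\<lambda>j. s j (cp j y)) {..<k}"

lemma s_car: "j < k \<Longrightarrow> y \<in> carrier G \<Longrightarrow> s j (cp j y) \<in> carrier G"
  using s_in cp_in Acar by blast

lemma S_hom: "S \<in> hom G G"
proof (rule homI)
  fix y assume "y \<in> carrier G" then show "S y \<in> carrier G" unfolding S_def using s_car by auto
next
  fix y z assume y: "y \<in> carrier G" and z: "z \<in> carrier G"
  have "S (y \<otimes> z) = finprod G (\<lambda>j. s j (cp j y) \<otimes> s j (cp j z)) {..<k}"
    unfolding S_def
  proof (rule finprod_cong')
    show "(\<lambda>j. s j (cp j y) \<otimes> s j (cp j z)) \<in> {..<k} \<rightarrow> carrier G" using s_car y z by auto
    fix j assume "j \<in> {..<k}" then have j: "j < k" by simp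
    show "s j (cp j (y \<otimes> z)) = s j (cp j y) \<otimes> s j (cp j z)"
      using cp_mult[OF y z j] s_mult j cp_in[OF y j] cp_in[OF z j] by simp
  qed simp
  also have "\<dots> = S y \<otimes> S z" unfolding S_def by (rule finprod_multf) (use s_car y z in auto)
  finally show "S (y \<otimes> z) = S y \<otimes> S z" .
qed

lemma cp_S: assumes i: "i < k" and y: "y \<in> carrier G" shows "cp i (S y) = s i (cp i y)"
proof -
  let ?f = "\<lambda>j\<in>{..<k}. s j (cp j y)"
  have f: "?f \<in> PiE {..<k} A" using s_in cp_in[OF y] by auto
  have "S y = finprod G ?f {..<k}" unfolding S_def by (rule finprod_cong') (use s_car y in auto)
  then show ?thesis using dp_comp_eq[OF D f, of i] i by simp
qed

definition "T0 y = finprod G (\<lambda>h. \<alpha> h (S (\<beta> (inv\<^bsub>H\<^esub> h) y))) (carrier H)"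
definition "T y = T0 y [^] m"

lemma F_hom: "h \<in> carrier H \<Longrightarrow> (\<lambda>y. \<alpha> h (S (\<beta> (inv\<^bsub>H\<^esub> h) y))) \<in> hom G G"
  using hom_comp_G[OF hom_comp_G[OF b_hom S_hom] a_hom] by simp

lemma F_car: "h \<in> carrier H \<Longrightarrow> y \<in> carrier G \<Longrightarrow> \<alpha> h (S (\<beta> (inv\<^bsub>H\<^esub> h) y)) \<in> carrier G"
  using hom_car[OF F_hom] by blast

lemma T0_hom: "T0 \<in> hom G G"
proof (rule homI)
  fix y assume "y \<in> carrier G" then show "T0 y \<in> carrier G" unfolding T0_def using F_car by auto
next
  fix y z assume y: "y \<in> carrier G" and z: "z \<in> carrier G"
  have "T0 (y \<otimes> z) = finprod G (\<lambda>h. \<alpha> h (S (\<beta> (inv\<^bsub>H\<^esub> h) y)) \<otimes> \<alpha> h (S (\<beta> (inv\<^bsub>H\<^esub> h) z))) (carrier H)"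
    unfolding T0_def
  proof (rule finprod_cong')
    show "(\<lambda>h. \<alpha> h (S (\<beta> (inv\<^bsub>H\<^esub> h) y)) \<otimes> \<alpha> h (S (\<beta> (inv\<^bsub>H\<^esub> h) z))) \<in> carrier H \<rightarrow> carrier G"
      using F_car y z by auto
    fix h assume h: "h \<in> carrier H"
    show "\<alpha> h (S (\<beta> (inv\<^bsub>H\<^esub> h) (y \<otimes> z))) = \<alpha> h (S (\<beta> (inv\<^bsub>H\<^esub> h) y)) \<otimes> \<alpha> h (S (\<beta> (inv\<^bsub>H\<^esub> h) z))"
      using hom_mult_G[OF F_hom[OF h] y z] .
  qed simp
  also have "\<dots> = T0 y \<otimes> T0 z" unfolding T0_def by (rule finprod_multf) (use F_car y z in auto)
  finally show "T0 (y \<otimes> z) = T0 y \<otimes> T0 z" .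
qed

lemma T_hom: "T \<in> hom G G"
proof (rule homI)
  fix y assume "y \<in> carrier G" then show "T y \<in> carrier G" unfolding T_def using hom_car[OF T0_hom] by simp
next
  fix y z assume y: "y \<in> carrier G" and z: "z \<in> carrier G"
  show "T (y \<otimes> z) = T y \<otimes> T z" unfolding T_def
    using hom_mult_G[OF T0_hom y z] pow_mult_distrib[OF m_comm] hom_car[OF T0_hom] y z by simp
qed

lemma T_int: assumes g: "g \<in> carrier H" and y: "y \<in> carrier G" shows "T (\<beta> g y) = \<alpha> g (T y)"
proof -
  have bgy: "\<beta> g y \<in> carrier G" using hom_car[OF b_hom[OF g] y] .
  let ?F = "\<lambda>h. \<alpha> h (S (\<beta> (inv\<^bsub>H\<^esub> h) (\<beta> g y)))"
  have img: "(\<lambda>h'. g \<otimes>\<^bsub>H\<^esub> h') ` carrier H = carrier H" using Hgr.surj_const_mult[OF g] .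
  have "T0 (\<beta> g y) = finprod G ?F ((\<lambda>h'. g \<otimes>\<^bsub>H\<^esub> h') ` carrier H)" using img by (simp add: T0_def)
  also have "\<dots> = finprod G (\<lambda>h'. ?F (g \<otimes>\<^bsub>H\<^esub> h')) (carrier H)"
    by (rule finprod_reindex) (use F_car bgy img Hgr.inj_on_cmult[OF g] in auto)
  also have "\<dots> = finprod G (\<lambda>h'. \<alpha> g (\<alpha> h' (S (\<beta> (inv\<^bsub>H\<^esub> h') y)))) (carrier H)"
  proof (rule finprod_cong')
    show "(\<lambda>h'. \<alpha> g (\<alpha> h' (S (\<beta> (inv\<^bsub>H\<^esub> h') y)))) \<in> carrier H \<rightarrow> carrier G"
      using hom_car[OF a_hom[OF g]] F_car y by auto
    fix h' assume h': "h' \<in> carrier H"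
    have gh: "g \<otimes>\<^bsub>H\<^esub> h' \<in> carrier H" using g h' by simp
    have "inv\<^bsub>H\<^esub> (g \<otimes>\<^bsub>H\<^esub> h') = inv\<^bsub>H\<^esub> h' \<otimes>\<^bsub>H\<^esub> inv\<^bsub>H\<^esub> g" using g h' by (simp add: Hgr.inv_mult_group)
    then have "\<beta> (inv\<^bsub>H\<^esub> (g \<otimes>\<^bsub>H\<^esub> h')) (\<beta> g y) = \<beta> (inv\<^bsub>H\<^esub> h') (\<beta> (inv\<^bsub>H\<^esub> g) (\<beta> g y))"
      using b_mul g h' bgy by simp
    also have "\<dots> = \<beta> (inv\<^bsub>H\<^esub> h') y" using b_inv2[OF g y] by simp
    finally have e: "\<beta> (inv\<^bsub>H\<^esub> (g \<otimes>\<^bsub>H\<^esub> h')) (\<beta> g y) = \<beta> (inv\<^bsub>H\<^esub> h') y" .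
    have Sc: "S (\<beta> (inv\<^bsub>H\<^esub> h') y) \<in> carrier G"
      using hom_car[OF S_hom hom_car[OF b_hom y]] h' by simp
    show "?F (g \<otimes>\<^bsub>H\<^esub> h') = \<alpha> g (\<alpha> h' (S (\<beta> (inv\<^bsub>H\<^esub> h') y)))"
      using e a_mul[OF g h' Sc] by simp
  qed simp
  also have "\<dots> = \<alpha> g (T0 y)"
    unfolding T0_def using hom_finprod_gen[OF a_hom[OF g] comm_group_axioms, of "\<lambda>h'. \<alpha> h' (S (\<beta> (inv\<^bsub>H\<^esub> h') y))" "carrier H"]
      F_car y by (auto simp: o_def)
  finally have "T0 (\<beta> g y) = \<alpha> g (T0 y)" .
  then show ?thesis unfolding T_def using hom_pow_G[OF a_hom[OF g] hom_car[OF T0_hom y]] by simp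
qed

lemma term_cong:
  assumes i: "i < k" and h: "h \<in> carrier H" and x: "x \<in> A i"
  shows "P i #> cp i (\<alpha> h (S (\<beta> (inv\<^bsub>H\<^esub> h) x))) = P i #> s i x"
proof -
  have xc: "x \<in> carrier G" using x Acar[OF i] by blast
  have hi: "inv\<^bsub>H\<^esub> h \<in> carrier H" using h by simp
  define z where "z = \<beta> (inv\<^bsub>H\<^esub> h) x"
  have zc: "z \<in> carrier G" unfolding z_def using hom_car[OF b_hom[OF hi] xc] .
  have czA: "cp i z \<in> A i" using cp_in[OF zc i] .
  have czc: "cp i z \<in> carrier G" using czA Acar[OF i] by blast
  have gS: "(\<lambda>y. S (\<beta> (inv\<^bsub>H\<^esub> h) y)) \<in> hom G G" using hom_comp_G[OF b_hom[OF hi] S_hom] .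
  have eqc: "\<And>a b. a \<in> carrier G \<Longrightarrow> b \<in> carrier G \<Longrightarrow> a \<otimes> inv b \<in> P i \<Longrightarrow> P i #> a = P i #> b"
    using coset_eq_iff[OF P_subgroup[OF i]] by blast
  have "P i #> cp i (\<alpha> h (S z)) = P i #> cp i (\<alpha> h (cp i (S z)))"
    using eqc[OF _ _ F1[OF i a_hom[OF h] gS x]] cp_car hom_car a_hom[OF h] S_hom zc i
    unfolding z_def by (metis hom_car)
  also have "cp i (S z) = s i (cp i z)" using cp_S[OF i zc] .
  also have "P i #> cp i (\<alpha> h (s i (cp i z))) = P i #> s i (cp i (\<beta> h (cp i z)))"
    using s_int i h czA by simp
  also have "P i #> s i (cp i (\<beta> h (cp i z))) = P i #> s i x"
  proof -
    have "P i #> cp i (\<beta> h (\<beta> (inv\<^bsub>H\<^esub> h) x)) = P i #> cp i (\<beta> h (cp i (\<beta> (inv\<^bsub>H\<^esub> h) x)))"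
      using eqc[OF _ _ F1[OF i b_hom[OF h] b_hom[OF hi] x]] cp_car[OF _ i] hom_car[OF b_hom[OF h]]
        hom_car[OF b_hom[OF hi] xc] xc czc z_def by (metis hom_car)
    then have "P i #> cp i (\<beta> h (cp i z)) = P i #> x"
      using b_inv[OF h xc] cp_single[OF i x i] unfolding z_def by simp
    then show ?thesis using s_coset i cp_in[OF hom_car[OF b_hom[OF h] czc] i] x by blast
  qed
  finally show ?thesis unfolding z_def .
qed

lemma T_cong:
  assumes i: "i < k" and x: "x \<in> A i"
  shows "cp i (T x) \<otimes> inv (s i x) \<in> P i"
proof -
  have xc: "x \<in> carrier G" using x Acar[OF i] by blast
  define c where "c = s i x"
  have cA: "c \<in> A i" unfolding c_def using s_in i x by blast
  have cc: "c \<in> carrier G" using cA Acar[OF i] by blast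
  define t where "t h = cp i (\<alpha> h (S (\<beta> (inv\<^bsub>H\<^esub> h) x)))" for h
  have tc: "\<And>h. h \<in> carrier H \<Longrightarrow> t h \<in> carrier G" unfolding t_def using cp_car[OF F_car i] xc by blast
  have tP: "\<And>h. h \<in> carrier H \<Longrightarrow> t h \<otimes> inv c \<in> P i"
    using term_cong[OF i _ x] coset_eq_iff[OF P_subgroup[OF i]] tc cc unfolding t_def c_def by blast
  have ct0: "cp i (T0 x) = finprod G t (carrier H)"
    unfolding T0_def t_def using hom_finprod_gen[OF cp_hom[OF i] comm_group_axioms, of "\<lambda>h. \<alpha> h (S (\<beta> (inv\<^bsub>H\<^esub> h) x))" "carrier H"]
      F_car xc by (auto simp: o_def)
  have "finprod G (\<lambda>h. t h \<otimes> inv c) (carrier H) \<in> P i"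
    by (rule finprod_in_subgroup[OF P_subgroup[OF i]]) (use tP in auto)
  moreover have "finprod G (\<lambda>h. t h \<otimes> inv c) (carrier H) = finprod G t (carrier H) \<otimes> inv (c [^] order H)"
  proof -
    have "finprod G (\<lambda>h. t h \<otimes> inv c) (carrier H) = finprod G t (carrier H) \<otimes> finprod G (\<lambda>h. inv c) (carrier H)"
      by (rule finprod_multf) (use tc cc in auto)
    also have "finprod G (\<lambda>h. inv c) (carrier H) = inv c [^] order H"
      using finprod_const[of "inv c" "carrier H"] cc by (simp add: order_def)
    also have "\<dots> = inv (c [^] order H)" using nat_pow_inv[OF cc] .
    finally show ?thesis .
  qed
  ultimately have wP: "cp i (T0 x) \<otimes> inv (c [^] order H) \<in> P i" using ct0 by simp
  define w where "w = cp i (T0 x) \<otimes> inv (c [^] order H)"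
  have wc: "w \<in> carrier G" unfolding w_def using cp_car[OF hom_car[OF T0_hom xc] i] cc by simp
  have ac: "cp i (T0 x) \<in> carrier G" using cp_car[OF hom_car[OF T0_hom xc] i] .
  have bc: "c [^] order H \<in> carrier G" using cc by simp
  have "c [^] order H \<otimes> w = cp i (T0 x) \<otimes> (c [^] order H \<otimes> inv (c [^] order H))"
    unfolding w_def by (rule m_lcomm[OF bc ac inv_closed[OF bc]])
  then have u: "cp i (T0 x) = c [^] order H \<otimes> w" using ac bc by simp
  define Xv where "Xv = (c [^] q) [^] p \<otimes> w [^] m"
  have Xc: "Xv \<in> carrier G" unfolding Xv_def using cc wc by simp
  have "cp i (T x) = (cp i (T0 x)) [^] m" unfolding T_def using hom_pow_G[OF cp_hom[OF i] hom_car[OF T0_hom xc]] .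
  also have "\<dots> = (c [^] order H) [^] m \<otimes> w [^] m" using u pow_mult_distrib[OF m_comm[OF bc wc] bc wc] by simp
  also have "(c [^] order H) [^] m = c [^] (order H * m)" using nat_pow_pow[OF cc] .
  also have "\<dots> = c [^] (p * q) \<otimes> c [^] (1::nat)" using mq nat_pow_mult[OF cc, of "p * q" 1] by simp
  also have "c [^] (p * q) = (c [^] q) [^] p" using nat_pow_pow[OF cc, of q p] by (simp add: mult.commute)
  finally have "cp i (T x) = (c [^] q) [^] p \<otimes> c \<otimes> w [^] m" using cc by simp
  also have "\<dots> = c \<otimes> Xv" unfolding Xv_def using cc wc by (simp add: m_assoc m_comm[of _ c])
  finally have "cp i (T x) \<otimes> inv c = (c \<otimes> Xv) \<otimes> inv c" by simp
  also have "\<dots> = Xv \<otimes> (c \<otimes> inv c)" using cc Xc by (simp add: m_comm[of c Xv] m_assoc)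
  finally have "cp i (T x) \<otimes> inv c = (c [^] q) [^] p \<otimes> w [^] m" using Xc cc unfolding Xv_def by simp
  moreover have "(c [^] q) [^] p \<in> P i" using powp_in_P Apow[OF i cA] by blast
  moreover have "w [^] m \<in> P i" using P_pow_closed[OF i] wP unfolding w_def by blast
  ultimately show ?thesis using subgroup.m_closed[OF P_subgroup[OF i]] unfolding c_def by simp
qed

lemma T_surj: "T ` carrier G = carrier G"
proof (rule F3[OF T_hom])
  fix j y assume j: "j < k" and y: "y \<in> A j"
  obtain x where x: "x \<in> A j" "P j #> s j x = P j #> y" using s_surj j y by blast
  have xc: "x \<in> carrier G" using x Acar[OF j] by blast
  have sc: "s j x \<in> carrier G" using s_in j x Acar[OF j] by blast
  have yc: "y \<in> carrier G" using y Acar[OF j] by blast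
  have tc: "cp j (T x) \<in> carrier G" using cp_car[OF hom_car[OF T_hom xc] j] .
  have "P j #> cp j (T x) = P j #> s j x" using T_cong[OF j x(1)] coset_eq_iff[OF P_subgroup[OF j] tc sc] by simp
  then have "P j #> cp j (T x) = P j #> y" using x by simp
  then have "cp j (T x) \<otimes> inv y \<in> P j" using coset_eq_iff[OF P_subgroup[OF j] tc yc] by simp
  then show "\<exists>a\<in>A j. cp j (T a) \<otimes> inv y \<in> P j" using x by blast
qed

lemma T_auto: "restrict T (carrier G) \<in> auto G"
proof -
  have hom: "restrict T (carrier G) \<in> hom G G"
    using T_hom by (auto simp: hom_def Pi_def)
  have "card (T ` carrier G) = card (carrier G)" using T_surj by simp
  then have inj: "inj_on T (carrier G)" by (rule eq_card_imp_inj_on[OF fin])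
  have "bij_betw (restrict T (carrier G)) (carrier G) (carrier G)"
    using inj T_surj by (simp add: bij_betw_def inj_on_def)
  then show ?thesis unfolding auto_def Bij_def using hom by simp
qed

lemma bwd_main: "rep_equiv H (AutoGroup G) \<alpha> \<beta>"
  unfolding rep_equiv_def
proof (intro bexI ballI)
  let ?T = "restrict T (carrier G)"
  show Tc: "?T \<in> carrier (AutoGroup G)" using T_auto by simp
  fix h assume h: "h \<in> carrier H"
  have bc: "\<beta> h \<in> carrier (AutoGroup G)" "\<alpha> h \<in> carrier (AutoGroup G)" using a_auto b_auto h by auto
  have "?T \<otimes>\<^bsub>AutoGroup G\<^esub> \<beta> h = \<alpha> h \<otimes>\<^bsub>AutoGroup G\<^esub> ?T"
  proof -
    have "compose (carrier G) ?T (\<beta> h) = compose (carrier G) (\<alpha> h) ?T"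
    proof (rule extensionalityI[of _ "carrier G"])
      show "compose (carrier G) ?T (\<beta> h) \<in> extensional (carrier G)" by (simp add: compose_def)
      show "compose (carrier G) (\<alpha> h) ?T \<in> extensional (carrier G)" by (simp add: compose_def)
      fix x assume x: "x \<in> carrier G"
      show "compose (carrier G) ?T (\<beta> h) x = compose (carrier G) (\<alpha> h) ?T x"
        using x T_int[OF h x] hom_car[OF b_hom[OF h] x] by (simp add: compose_def)
    qed
    then show ?thesis using Aut_mult T_auto a_auto b_auto h by metis
  qed
  then have e: "inv\<^bsub>AutoGroup G\<^esub> ?T \<otimes>\<^bsub>AutoGroup G\<^esub> (?T \<otimes>\<^bsub>AutoGroup G\<^esub> \<beta> h) =
     inv\<^bsub>AutoGroup G\<^esub> ?T \<otimes>\<^bsub>AutoGroup G\<^esub> (\<alpha> h \<otimes>\<^bsub>AutoGroup G\<^esub> ?T)" by simp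
  have ic: "inv\<^bsub>AutoGroup G\<^esub> ?T \<in> carrier (AutoGroup G)" using Au.inv_closed[OF Tc] .
  have "inv\<^bsub>AutoGroup G\<^esub> ?T \<otimes>\<^bsub>AutoGroup G\<^esub> (?T \<otimes>\<^bsub>AutoGroup G\<^esub> \<beta> h) =
     (inv\<^bsub>AutoGroup G\<^esub> ?T \<otimes>\<^bsub>AutoGroup G\<^esub> ?T) \<otimes>\<^bsub>AutoGroup G\<^esub> \<beta> h"
    using Au.m_assoc[OF ic Tc bc(1)] by simp
  also have "\<dots> = \<beta> h" using Au.l_inv[OF Tc] Au.l_one[OF bc(1)] by simp
  finally have e1: "inv\<^bsub>AutoGroup G\<^esub> ?T \<otimes>\<^bsub>AutoGroup G\<^esub> (?T \<otimes>\<^bsub>AutoGroup G\<^esub> \<beta> h) = \<beta> h" .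
  have e2: "inv\<^bsub>AutoGroup G\<^esub> ?T \<otimes>\<^bsub>AutoGroup G\<^esub> (\<alpha> h \<otimes>\<^bsub>AutoGroup G\<^esub> ?T) =
     inv\<^bsub>AutoGroup G\<^esub> ?T \<otimes>\<^bsub>AutoGroup G\<^esub> \<alpha> h \<otimes>\<^bsub>AutoGroup G\<^esub> ?T"
    using Au.m_assoc[OF ic bc(2) Tc] by simp
  show "\<beta> h = inv\<^bsub>AutoGroup G\<^esub> ?T \<otimes>\<^bsub>AutoGroup G\<^esub> \<alpha> h \<otimes>\<^bsub>AutoGroup G\<^esub> ?T"
    using e e1 e2 by simp
qed

end

end

context L38
begin

lemma fwd:
  assumes Hg: "group H" and ah: "\<alpha> \<in> hom H (AutoGroup G)" and bh: "\<beta> \<in> hom H (AutoGroup G)"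
    and i: "i < k" and R: "rep_equiv H (AutoGroup G) \<alpha> \<beta>"
  shows "rep_equiv H (AutoGroup (quotp G p (A i))) (\<lambda>h. Lambda_i G p A k i (\<alpha> h)) (\<lambda>h. Lambda_i G p A k i (\<beta> h))"
proof -
  let ?L = "Lambda_i G p A k i"
  let ?Q = "quotp G p (A i)"
  obtain \<psi> where psi: "\<psi> \<in> carrier (AutoGroup G)"
    and e: "\<forall>h\<in>carrier H. \<beta> h = inv\<^bsub>AutoGroup G\<^esub> \<psi> \<otimes>\<^bsub>AutoGroup G\<^esub> \<alpha> h \<otimes>\<^bsub>AutoGroup G\<^esub> \<psi>"
    using R unfolding rep_equiv_def by blast
  interpret Au: group "AutoGroup G" by (rule AutoGroup)
  have gQ: "group (AutoGroup ?Q)" using group.AutoGroup[OF Q_group[OF i]] .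
  have gh: "group_hom (AutoGroup G) (AutoGroup ?Q) ?L"
    unfolding group_hom_def group_hom_axioms_def using Au.is_group gQ Lam_hom[OF i] by simp
  show ?thesis unfolding rep_equiv_def
  proof (intro bexI ballI)
    show "?L \<psi> \<in> carrier (AutoGroup ?Q)" using group_hom.hom_closed[OF gh psi] .
    fix h assume h: "h \<in> carrier H"
    have ahc: "\<alpha> h \<in> carrier (AutoGroup G)" using ah h by (auto simp: hom_def)
    have ic: "inv\<^bsub>AutoGroup G\<^esub> \<psi> \<in> carrier (AutoGroup G)" using Au.inv_closed[OF psi] .
    have "?L (\<beta> h) = ?L (inv\<^bsub>AutoGroup G\<^esub> \<psi> \<otimes>\<^bsub>AutoGroup G\<^esub> \<alpha> h \<otimes>\<^bsub>AutoGroup G\<^esub> \<psi>)" using e h by simp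
    also have "\<dots> = ?L (inv\<^bsub>AutoGroup G\<^esub> \<psi>) \<otimes>\<^bsub>AutoGroup ?Q\<^esub> ?L (\<alpha> h) \<otimes>\<^bsub>AutoGroup ?Q\<^esub> ?L \<psi>"
      using group_hom.hom_mult[OF gh] ic ahc psi Au.m_closed by simp
    also have "?L (inv\<^bsub>AutoGroup G\<^esub> \<psi>) = inv\<^bsub>AutoGroup ?Q\<^esub> ?L \<psi>" using group_hom.hom_inv[OF gh psi] .
    finally show "?L (\<beta> h) = inv\<^bsub>AutoGroup ?Q\<^esub> ?L \<psi> \<otimes>\<^bsub>AutoGroup ?Q\<^esub> ?L (\<alpha> h) \<otimes>\<^bsub>AutoGroup ?Q\<^esub> ?L \<psi>" .
  qed
qed

lemma bwd:
  assumes Hg: "group H" and Hf: "finite (carrier H)" and npd: "\<not> p dvd order H"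
    and ah: "\<alpha> \<in> hom H (AutoGroup G)" and bh: "\<beta> \<in> hom H (AutoGroup G)"
    and R: "\<forall>i<k. rep_equiv H (AutoGroup (quotp G p (A i))) (\<lambda>h. Lambda_i G p A k i (\<alpha> h)) (\<lambda>h. Lambda_i G p A k i (\<beta> h))"
  shows "rep_equiv H (AutoGroup G) \<alpha> \<beta>"
proof -
  have "\<forall>i. \<exists>\<psi>. i < k \<longrightarrow> \<psi> \<in> auto (quotp G p (A i)) \<and> (\<forall>h\<in>carrier H. Lambda_i G p A k i (\<beta> h) =
      inv\<^bsub>AutoGroup (quotp G p (A i))\<^esub> \<psi> \<otimes>\<^bsub>AutoGroup (quotp G p (A i))\<^esub> Lambda_i G p A k i (\<alpha> h) \<otimes>\<^bsub>AutoGroup (quotp G p (A i))\<^esub> \<psi>)"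
    using R unfolding rep_equiv_def by auto
  then obtain \<psi> where psi: "\<And>i. i < k \<Longrightarrow> \<psi> i \<in> auto (quotp G p (A i)) \<and> (\<forall>h\<in>carrier H. Lambda_i G p A k i (\<beta> h) =
      inv\<^bsub>AutoGroup (quotp G p (A i))\<^esub> \<psi> i \<otimes>\<^bsub>AutoGroup (quotp G p (A i))\<^esub> Lambda_i G p A k i (\<alpha> h) \<otimes>\<^bsub>AutoGroup (quotp G p (A i))\<^esub> \<psi> i)"
    by metis
  have a_auto: "\<And>h. h \<in> carrier H \<Longrightarrow> \<alpha> h \<in> auto G" using ah by (auto simp: hom_def)
  have b_auto: "\<And>h. h \<in> carrier H \<Longrightarrow> \<beta> h \<in> auto G" using bh by (auto simp: hom_def)
  have intertw: "\<psi> i (Lambda_i G p A k i (\<beta> h) Y) = Lambda_i G p A k i (\<alpha> h) (\<psi> i Y)"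
    if i: "i < k" and h: "h \<in> carrier H" and Y: "Y \<in> carrier (quotp G p (A i))" for i h Y
  proof -
    let ?Q = "quotp G p (A i)"
    let ?L = "Lambda_i G p A k i"
    interpret AQ: group "AutoGroup ?Q" using group.AutoGroup[OF Q_group[OF i]] .
    have pc: "\<psi> i \<in> carrier (AutoGroup ?Q)" using psi[OF i] by simp
    have la: "?L (\<alpha> h) \<in> carrier (AutoGroup ?Q)" using Lam_auto[OF i a_auto[OF h]] by simp
    have lb: "?L (\<beta> h) \<in> carrier (AutoGroup ?Q)" using Lam_auto[OF i b_auto[OF h]] by simp
    have e: "?L (\<beta> h) = inv\<^bsub>AutoGroup ?Q\<^esub> \<psi> i \<otimes>\<^bsub>AutoGroup ?Q\<^esub> ?L (\<alpha> h) \<otimes>\<^bsub>AutoGroup ?Q\<^esub> \<psi> i"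
      using psi[OF i] h by blast
    have ic: "inv\<^bsub>AutoGroup ?Q\<^esub> \<psi> i \<in> carrier (AutoGroup ?Q)" using AQ.inv_closed[OF pc] .
    have "\<psi> i \<otimes>\<^bsub>AutoGroup ?Q\<^esub> ?L (\<beta> h) = \<psi> i \<otimes>\<^bsub>AutoGroup ?Q\<^esub> ((inv\<^bsub>AutoGroup ?Q\<^esub> \<psi> i \<otimes>\<^bsub>AutoGroup ?Q\<^esub> ?L (\<alpha> h)) \<otimes>\<^bsub>AutoGroup ?Q\<^esub> \<psi> i)"
      using e by simp
    also have "\<dots> = (\<psi> i \<otimes>\<^bsub>AutoGroup ?Q\<^esub> (inv\<^bsub>AutoGroup ?Q\<^esub> \<psi> i \<otimes>\<^bsub>AutoGroup ?Q\<^esub> ?L (\<alpha> h))) \<otimes>\<^bsub>AutoGroup ?Q\<^esub> \<psi> i"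
      using AQ.m_assoc[OF pc AQ.m_closed[OF ic la] pc] by simp
    also have "\<psi> i \<otimes>\<^bsub>AutoGroup ?Q\<^esub> (inv\<^bsub>AutoGroup ?Q\<^esub> \<psi> i \<otimes>\<^bsub>AutoGroup ?Q\<^esub> ?L (\<alpha> h)) = ?L (\<alpha> h)"
      using AQ.m_assoc[OF pc ic la, symmetric] AQ.r_inv[OF pc] AQ.l_one[OF la] by simp
    finally have "\<psi> i \<otimes>\<^bsub>AutoGroup ?Q\<^esub> ?L (\<beta> h) = ?L (\<alpha> h) \<otimes>\<^bsub>AutoGroup ?Q\<^esub> \<psi> i" .
    then have "compose (carrier ?Q) (\<psi> i) (?L (\<beta> h)) = compose (carrier ?Q) (?L (\<alpha> h)) (\<psi> i)"
      using Aut_mult pc la lb by (metis Aut_carrier)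
    then have "compose (carrier ?Q) (\<psi> i) (?L (\<beta> h)) Y = compose (carrier ?Q) (?L (\<alpha> h)) (\<psi> i) Y" by simp
    then show ?thesis using Y by (simp add: compose_def)
  qed
  have "\<forall>i. \<exists>s. i < k \<longrightarrow> (\<forall>x\<in>A i. s x \<in> A i) \<and> (\<forall>x\<in>A i. \<forall>z\<in>A i. s (x \<otimes> z) = s x \<otimes> s z)
           \<and> (\<forall>x\<in>A i. \<psi> i (P i #> x) = P i #> s x)"
  proof (intro allI)
    fix i
    show "\<exists>s. i < k \<longrightarrow> (\<forall>x\<in>A i. s x \<in> A i) \<and> (\<forall>x\<in>A i. \<forall>z\<in>A i. s (x \<otimes> z) = s x \<otimes> s z)
           \<and> (\<forall>x\<in>A i. \<psi> i (P i #> x) = P i #> s x)"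
    proof (cases "i < k")
      case True
      have "\<psi> i \<in> hom (quotp G p (A i)) (quotp G p (A i))" using psi[OF True] auto_hom by blast
      from lift[OF True this] show ?thesis by blast
    qed simp
  qed
  then obtain s where s: "\<And>i. i < k \<Longrightarrow> (\<forall>x\<in>A i. s i x \<in> A i) \<and> (\<forall>x\<in>A i. \<forall>z\<in>A i. s i (x \<otimes> z) = s i x \<otimes> s i z)
           \<and> (\<forall>x\<in>A i. \<psi> i (P i #> x) = P i #> s i x)" by metis
  have s_in: "\<forall>i<k. \<forall>x\<in>A i. s i x \<in> A i" using s by blast
  have s_mult: "\<forall>i<k. \<forall>x\<in>A i. \<forall>z\<in>A i. s i (x \<otimes> z) = s i x \<otimes> s i z" using s by blast
  have s_int: "\<forall>i<k. \<forall>h\<in>carrier H. \<forall>x\<in>A i. P i #> s i (cp i (\<beta> h x)) = P i #> cp i (\<alpha> h (s i x))"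
  proof (intro allI impI ballI)
    fix i h x assume i: "i < k" and h: "h \<in> carrier H" and x: "x \<in> A i"
    have xc: "x \<in> carrier G" using x Acar[OF i] by blast
    have cb: "cp i (\<beta> h x) \<in> A i" using cp_in[OF hom_car[OF auto_hom[OF b_auto[OF h]] xc] i] .
    have "P i #> s i (cp i (\<beta> h x)) = \<psi> i (P i #> cp i (\<beta> h x))" using s[OF i] cb by simp
    also have "\<dots> = \<psi> i (Lambda_i G p A k i (\<beta> h) (P i #> x))" using Lam_eval[OF i auto_hom[OF b_auto[OF h]] x] by simp
    also have "\<dots> = Lambda_i G p A k i (\<alpha> h) (\<psi> i (P i #> x))" using intertw[OF i h pi_car[OF i x]] .
    also have "\<dots> = Lambda_i G p A k i (\<alpha> h) (P i #> s i x)" using s[OF i] x by simp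
    also have "\<dots> = P i #> cp i (\<alpha> h (s i x))" using Lam_eval[OF i auto_hom[OF a_auto[OF h]]] s[OF i] x by simp
    finally show "P i #> s i (cp i (\<beta> h x)) = P i #> cp i (\<alpha> h (s i x))" .
  qed
  have s_surj: "\<forall>i<k. \<forall>y\<in>A i. \<exists>x\<in>A i. P i #> s i x = P i #> y"
  proof (intro allI impI ballI)
    fix i y assume i: "i < k" and y: "y \<in> A i"
    have "bij_betw (\<psi> i) (carrier (quotp G p (A i))) (carrier (quotp G p (A i)))"
      using psi[OF i] unfolding auto_def Bij_def by blast
    then have "\<psi> i ` carrier (quotp G p (A i)) = carrier (quotp G p (A i))" by (simp add: bij_betw_def)
    then have "P i #> y \<in> \<psi> i ` carrier (quotp G p (A i))" using pi_car[OF i y] by simp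
    then obtain Y where Y: "Y \<in> carrier (quotp G p (A i))" "\<psi> i Y = P i #> y" by (rule imageE) simp
    then obtain x where x: "x \<in> A i" "Y = P i #> x" using Qcar by auto
    show "\<exists>x\<in>A i. P i #> s i x = P i #> y" using x Y s[OF i] by auto
  qed
  have s_coset: "\<forall>i<k. \<forall>a\<in>A i. \<forall>b\<in>A i. P i #> a = P i #> b \<longrightarrow> P i #> s i a = P i #> s i b"
    using s by metis
  have oH: "order H \<noteq> 0" using Hf monoid.order_gt_0_iff_finite[OF group.is_monoid[OF Hg]] by simp
  have cop: "coprime p (order H)" using prime_imp_coprime[OF pr npd] .
  have "gcd (order H) p = 1" using cop by (simp add: coprime_iff_gcd_eq_1 gcd.commute)
  then obtain m q where mq: "order H * m = p * q + 1" using bezout_nat[OF oH, of p] by auto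
  show ?thesis using bwd_main[OF Hg Hf ah bh s_in s_mult s_int s_surj s_coset mq] .
qed

end

theorem lemma3p8:
  fixes G :: "('a, 'b) monoid_scheme" and H :: "('h, 'c) monoid_scheme"
    and p k :: nat and A :: "nat \<Rightarrow> 'a set" and \<alpha> \<beta> :: "'h \<Rightarrow> ('a \<Rightarrow> 'a)"
  assumes "comm_group G" and "finite (carrier G)" and "Factorial_Ring.prime p"
    and "\<exists>n. order G = p ^ n"
    and "int_dirprod G A k"
    and "\<forall>i<k. A i \<noteq> {\<one>\<^bsub>G\<^esub>} \<and> homocyclic G (A i)"
    and "\<forall>i<k. \<forall>j<k. i \<noteq> j \<longrightarrow> grp_exponent (G\<lparr>carrier := A i\<rparr>) \<noteq> grp_exponent (G\<lparr>carrier := A j\<rparr>)"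
    and "group H" and "finite (carrier H)" and "\<not> p dvd order H"
    and "\<alpha> \<in> hom H (AutoGroup G)" and "\<beta> \<in> hom H (AutoGroup G)"
  shows "rep_equiv H (AutoGroup G) \<alpha> \<beta> \<longleftrightarrow>
    (\<forall>i<k. rep_equiv H (AutoGroup (quotp G p (A i)))
              (\<lambda>h. Lambda_i G p A k i (\<alpha> h)) (\<lambda>h. Lambda_i G p A k i (\<beta> h)))"
proof -
  have L: "L38 G A k p" unfolding L38_def L38_axioms_def using assms by blast
  show ?thesis
    using L38.fwd[OF L assms(8) assms(11) assms(12)] L38.bwd[OF L assms(8) assms(9) assms(10) assms(11) assms(12)]
    by blast
qed

end
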